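(* Let $M$ be a smooth manifold, let $\nabla$ be an affine connection on $M$ and let $(\hat J_1,\hat J_2,\hat J)$ be a generalized quaternionic structure on $M$. Then the canonical connection of $(\hat J_1,\hat J_2,\nabla)$ is the generalized Obata connection.
   Context: $E:=TM\oplus T^*M$. The $\nabla$-bracket: $[X+\eta,Y+\beta]_\nabla:=[X,Y]+\nabla_X\beta-\nabla_Y\eta$. $N^\nabla_{\hat K}(\sigma,\tau):=[\hat K\sigma,\hat K\tau]_\nabla-\hat K[\hat K\sigma,\tau]_\nabla-\hat K[\sigma,\hat K\tau]_\nabla+\hat K^2[\sigma,\tau]_\nabla$; $\hat K$ is $\nabla$-integrable if this vanishes. A generalized quaternionic structure is a triple of endomorphisms $\hat J_1,\hat J_2,\hat J=\hat J_1\hat J_2$ of $E$ with $\hat J_1^2=\hat J_2^2=-I$, $\hat J_1\hat J_2=-\hat J_2\hat J_1$, all three $\nabla$-integrable. A generalized affine connection is an $\mathbb R$-bilinear $D$ on sections of $E$ with $D_{f\sigma}\tau=fD_\sigma\tau$, $D_\sigma(f\tau)=X(f)\tau+fD_\sigma\tau$ for $\sigma=X+\eta$. The canonical connection of $(\hat J_1,\hat J_2,\nabla)$ is the unique generalized affine connection $D$ with $D\hat J_1=D\hat J_2=D\hat J=0$ and $D_\sigma\tau-D_\tau\sigma-[\sigma,\tau]_\nabla=0$ (complex-linear extensions) for all sections $\sigma$ of $V_1=\{\sigma-\sqrt{-1}\hat J_1\sigma\}$ and $\tau$ of $V_2=\{\sigma+\sqrt{-1}\hat J_1\sigma\}$ in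 $E\otimes\mathbb C$. Writing $\hat J_3:=\hat J$, the generalized Obata connection is $D_\sigma\tau=\frac1{12}\Big\{\sum_{(\alpha,\beta,\gamma)}\hat J_\alpha([\hat J_\beta\sigma,\hat J_\gamma\tau]_\nabla+[\hat J_\beta\tau,\hat J_\gamma\sigma]_\nabla)+2\sum_{\alpha=1}^3\hat J_\alpha([\hat J_\alpha\sigma,\tau]_\nabla+[\hat J_\alpha\tau,\sigma]_\nabla)-\sum_{\alpha=1}^3N^\nabla_{\hat J_\alpha}(\sigma,\tau)\Big\}+\frac12[\sigma,\tau]_\nabla$, where $(\alpha,\beta,\gamma)$ runs over the cyclic permutations of $(1,2,3)$. *)

theory Defs
  imports "HOL-Analysis.Analysis"
begin

text \<open>C-infinity on an open set S: differentiable, and every directional derivative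
  is again C-infinity (greatest fixed point = differentiable to all orders).\<close>
coinductive cinf_on :: "'a::euclidean_space set \<Rightarrow> ('a \<Rightarrow> real) \<Rightarrow> bool" where
  "f differentiable_on S \<Longrightarrow> (\<forall>v. cinf_on S (\<lambda>x. frechet_derivative f (at x) v))
    \<Longrightarrow> cinf_on S f"

section \<open>Smooth manifolds (the type 'm is the underlying point set)\<close>

definition atlas_open :: "('m set \<times> ('m \<Rightarrow> 'e::euclidean_space)) set \<Rightarrow> 'm set \<Rightarrow> bool" where
  "atlas_open A W \<longleftrightarrow> (\<forall>(U,\<phi>)\<in>A. open (\<phi> ` (W \<inter> U)))"

definition smooth_manifold :: "('m set \<times> ('m \<Rightarrow> 'e::euclidean_space)) set \<Rightarrow> bool" where
  "smooth_manifold A \<longleftrightarrow>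
     (\<Union>(U,\<phi>)\<in>A. U) = UNIV \<and>
     (\<forall>(U,\<phi>)\<in>A. inj_on \<phi> U) \<and>
     (\<forall>(U,\<phi>)\<in>A. \<forall>(V,\<psi>)\<in>A. open (\<phi> ` (U \<inter> V)) \<and>
        (\<forall>i\<in>Basis. cinf_on (\<phi> ` (U \<inter> V)) (\<lambda>x. \<psi> (inv_into U \<phi> x) \<bullet> i))) \<and>
     (\<forall>p q. p \<noteq> q \<longrightarrow> (\<exists>W1 W2. atlas_open A W1 \<and> atlas_open A W2 \<and>
        p \<in> W1 \<and> q \<in> W2 \<and> W1 \<inter> W2 = {})) \<and>
     (\<exists>B. countable B \<and> (\<forall>W\<in>B. atlas_open A W) \<and>
        (\<forall>W. atlas_open A W \<longrightarrow> (\<exists>B'\<subseteq>B. W = \<Union>B')))"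

definition smooth_fns :: "('m set \<times> ('m \<Rightarrow> 'e::euclidean_space)) set \<Rightarrow> ('m \<Rightarrow> real) set" where
  "smooth_fns A = {f. \<forall>(U,\<phi>)\<in>A. cinf_on (\<phi> ` U) (f \<circ> inv_into U \<phi>)}"

section \<open>Vector fields (derivations of C-infinity(M)), 1-forms, sections of TM + T*M\<close>

type_synonym 'm fn = "'m \<Rightarrow> real"
type_synonym 'm vf = "'m fn \<Rightarrow> 'm fn"
type_synonym 'm form = "'m vf \<Rightarrow> 'm fn"
type_synonym 'm sec = "'m vf \<times> 'm form"

definition vector_fields :: "('m set \<times> ('m \<Rightarrow> 'e::euclidean_space)) set \<Rightarrow> 'm vf set" where
  "vector_fields A = {X.
     (\<forall>f\<in>smooth_fns A. X f \<in> smooth_fns A) \<and>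
     (\<forall>f\<in>smooth_fns A. \<forall>g\<in>smooth_fns A.
        X (\<lambda>p. f p + g p) = (\<lambda>p. X f p + X g p) \<and>
        X (\<lambda>p. f p * g p) = (\<lambda>p. f p * X g p + g p * X f p)) \<and>
     (\<forall>c. \<forall>f\<in>smooth_fns A. X (\<lambda>p. c * f p) = (\<lambda>p. c * X f p)) \<and>
     (\<forall>f. f \<notin> smooth_fns A \<longrightarrow> X f = (\<lambda>p. 0))}"

definition vf_add :: "'m vf \<Rightarrow> 'm vf \<Rightarrow> 'm vf" where
  "vf_add X Y = (\<lambda>g p. X g p + Y g p)"

definition vf_smul :: "'m fn \<Rightarrow> 'm vf \<Rightarrow> 'm vf" where
  "vf_smul f X = (\<lambda>g p. f p * X g p)"

definition lie :: "'m vf \<Rightarrow> 'm vf \<Rightarrow> 'm vf" where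
  "lie X Y = (\<lambda>g p. X (Y g) p - Y (X g) p)"

definition one_forms :: "('m set \<times> ('m \<Rightarrow> 'e::euclidean_space)) set \<Rightarrow> 'm form set" where
  "one_forms A = {\<eta>.
     (\<forall>X\<in>vector_fields A. \<eta> X \<in> smooth_fns A) \<and>
     (\<forall>X\<in>vector_fields A. \<forall>Y\<in>vector_fields A. \<eta> (vf_add X Y) = (\<lambda>p. \<eta> X p + \<eta> Y p)) \<and>
     (\<forall>f\<in>smooth_fns A. \<forall>X\<in>vector_fields A. \<eta> (vf_smul f X) = (\<lambda>p. f p * \<eta> X p)) \<and>
     (\<forall>X. X \<notin> vector_fields A \<longrightarrow> \<eta> X = (\<lambda>p. 0))}"

definition affine_connection ::
  "('m set \<times> ('m \<Rightarrow> 'e::euclidean_space)) set \<Rightarrow> ('m vf \<Rightarrow> 'm vf \<Rightarrow> 'm vf) \<Rightarrow> bool" where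
  "affine_connection A nb \<longleftrightarrow>
     (\<forall>X\<in>vector_fields A. \<forall>Y\<in>vector_fields A. nb X Y \<in> vector_fields A) \<and>
     (\<forall>X\<in>vector_fields A. \<forall>X'\<in>vector_fields A. \<forall>Y\<in>vector_fields A.
        nb (vf_add X X') Y = vf_add (nb X Y) (nb X' Y)) \<and>
     (\<forall>X\<in>vector_fields A. \<forall>Y\<in>vector_fields A. \<forall>Y'\<in>vector_fields A.
        nb X (vf_add Y Y') = vf_add (nb X Y) (nb X Y')) \<and>
     (\<forall>f\<in>smooth_fns A. \<forall>X\<in>vector_fields A. \<forall>Y\<in>vector_fields A.
        nb (vf_smul f X) Y = vf_smul f (nb X Y) \<and>
        nb X (vf_smul f Y) = vf_add (vf_smul (X f) Y) (vf_smul f (nb X Y)))"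

definition form_nabla ::
  "('m set \<times> ('m \<Rightarrow> 'e::euclidean_space)) set \<Rightarrow> ('m vf \<Rightarrow> 'm vf \<Rightarrow> 'm vf) \<Rightarrow> 'm vf \<Rightarrow> 'm form \<Rightarrow> 'm form" where
  "form_nabla A nb X \<eta> = (\<lambda>Y. if Y \<in> vector_fields A then (\<lambda>p. X (\<eta> Y) p - \<eta> (nb X Y) p) else (\<lambda>p. 0))"

definition sections :: "('m set \<times> ('m \<Rightarrow> 'e::euclidean_space)) set \<Rightarrow> 'm sec set" where
  "sections A = vector_fields A \<times> one_forms A"

definition sec_add :: "'m sec \<Rightarrow> 'm sec \<Rightarrow> 'm sec" where
  "sec_add \<sigma> \<tau> = (vf_add (fst \<sigma>) (fst \<tau>), \<lambda>Z p. snd \<sigma> Z p + snd \<tau> Z p)"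

definition sec_smul :: "'m fn \<Rightarrow> 'm sec \<Rightarrow> 'm sec" where
  "sec_smul f \<sigma> = (vf_smul f (fst \<sigma>), \<lambda>Z p. f p * snd \<sigma> Z p)"

definition sec_scale :: "real \<Rightarrow> 'm sec \<Rightarrow> 'm sec" where
  "sec_scale c \<sigma> = sec_smul (\<lambda>p. c) \<sigma>"

definition sec_neg :: "'m sec \<Rightarrow> 'm sec" where
  "sec_neg \<sigma> = sec_scale (-1) \<sigma>"

definition sec_sub :: "'m sec \<Rightarrow> 'm sec \<Rightarrow> 'm sec" where
  "sec_sub \<sigma> \<tau> = sec_add \<sigma> (sec_neg \<tau>)"

definition sec_zero :: "'m sec" where
  "sec_zero = ((\<lambda>g p. 0), (\<lambda>Z p. 0))"

definition nbracket ::
  "('m set \<times> ('m \<Rightarrow> 'e::euclidean_space)) set \<Rightarrow> ('m vf \<Rightarrow> 'm vf \<Rightarrow> 'm vf) \<Rightarrow> 'm sec \<Rightarrow> 'm sec \<Rightarrow> 'm sec" where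
  "nbracket A nb \<sigma> \<tau> = (lie (fst \<sigma>) (fst \<tau>),
      \<lambda>Z p. form_nabla A nb (fst \<sigma>) (snd \<tau>) Z p - form_nabla A nb (fst \<tau>) (snd \<sigma>) Z p)"

definition gen_endo :: "('m set \<times> ('m \<Rightarrow> 'e::euclidean_space)) set \<Rightarrow> ('m sec \<Rightarrow> 'm sec) \<Rightarrow> bool" where
  "gen_endo A K \<longleftrightarrow>
     (\<forall>\<sigma>\<in>sections A. K \<sigma> \<in> sections A) \<and>
     (\<forall>\<sigma>\<in>sections A. \<forall>\<tau>\<in>sections A. K (sec_add \<sigma> \<tau>) = sec_add (K \<sigma>) (K \<tau>)) \<and>
     (\<forall>f\<in>smooth_fns A. \<forall>\<sigma>\<in>sections A. K (sec_smul f \<sigma>) = sec_smul f (K \<sigma>))"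

definition nijenhuis ::
  "('m set \<times> ('m \<Rightarrow> 'e::euclidean_space)) set \<Rightarrow> ('m vf \<Rightarrow> 'm vf \<Rightarrow> 'm vf) \<Rightarrow> ('m sec \<Rightarrow> 'm sec)
     \<Rightarrow> 'm sec \<Rightarrow> 'm sec \<Rightarrow> 'm sec" where
  "nijenhuis A nb K \<sigma> \<tau> =
     sec_add (sec_sub (sec_sub (nbracket A nb (K \<sigma>) (K \<tau>))
                               (K (nbracket A nb (K \<sigma>) \<tau>)))
                      (K (nbracket A nb \<sigma> (K \<tau>))))
             (K (K (nbracket A nb \<sigma> \<tau>)))"

definition nabla_integrable ::
  "('m set \<times> ('m \<Rightarrow> 'e::euclidean_space)) set \<Rightarrow> ('m vf \<Rightarrow> 'm vf \<Rightarrow> 'm vf) \<Rightarrow> ('m sec \<Rightarrow> 'm sec) \<Rightarrow> bool" where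
  "nabla_integrable A nb K \<longleftrightarrow>
     (\<forall>\<sigma>\<in>sections A. \<forall>\<tau>\<in>sections A. nijenhuis A nb K \<sigma> \<tau> = sec_zero)"

definition gen_quaternionic ::
  "('m set \<times> ('m \<Rightarrow> 'e::euclidean_space)) set \<Rightarrow> ('m vf \<Rightarrow> 'm vf \<Rightarrow> 'm vf)
     \<Rightarrow> ('m sec \<Rightarrow> 'm sec) \<Rightarrow> ('m sec \<Rightarrow> 'm sec) \<Rightarrow> bool" where
  "gen_quaternionic A nb J1 J2 \<longleftrightarrow>
     gen_endo A J1 \<and> gen_endo A J2 \<and>
     (\<forall>\<sigma>\<in>sections A. J1 (J1 \<sigma>) = sec_neg \<sigma>) \<and>
     (\<forall>\<sigma>\<in>sections A. J2 (J2 \<sigma>) = sec_neg \<sigma>) \<and>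
     (\<forall>\<sigma>\<in>sections A. J1 (J2 \<sigma>) = sec_neg (J2 (J1 \<sigma>))) \<and>
     nabla_integrable A nb J1 \<and> nabla_integrable A nb J2 \<and> nabla_integrable A nb (J1 \<circ> J2)"

definition gen_affine_connection ::
  "('m set \<times> ('m \<Rightarrow> 'e::euclidean_space)) set \<Rightarrow> ('m sec \<Rightarrow> 'm sec \<Rightarrow> 'm sec) \<Rightarrow> bool" where
  "gen_affine_connection A D \<longleftrightarrow>
     (\<forall>\<sigma>\<in>sections A. \<forall>\<tau>\<in>sections A. D \<sigma> \<tau> \<in> sections A) \<and>
     (\<forall>\<sigma>\<in>sections A. \<forall>\<sigma>'\<in>sections A. \<forall>\<tau>\<in>sections A.
        D (sec_add \<sigma> \<sigma>') \<tau> = sec_add (D \<sigma> \<tau>) (D \<sigma>' \<tau>)) \<and>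
     (\<forall>\<sigma>\<in>sections A. \<forall>\<tau>\<in>sections A. \<forall>\<tau>'\<in>sections A.
        D \<sigma> (sec_add \<tau> \<tau>') = sec_add (D \<sigma> \<tau>) (D \<sigma> \<tau>')) \<and>
     (\<forall>f\<in>smooth_fns A. \<forall>\<sigma>\<in>sections A. \<forall>\<tau>\<in>sections A.
        D (sec_smul f \<sigma>) \<tau> = sec_smul f (D \<sigma> \<tau>) \<and>
        D \<sigma> (sec_smul f \<tau>) = sec_add (sec_smul (fst \<sigma> f) \<tau>) (sec_smul f (D \<sigma> \<tau>)))"

text \<open>Complex sections of E tensor C are pairs (a,b) meaning a + i b; complex-bilinear
  extension of a real bilinear operation B.\<close>
definition cext :: "('m sec \<Rightarrow> 'm sec \<Rightarrow> 'm sec) \<Rightarrow> 'm sec \<times> 'm sec \<Rightarrow> 'm sec \<times> 'm sec \<Rightarrow> 'm sec \<times> 'm sec" where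
  "cext B s t = (sec_sub (B (fst s) (fst t)) (B (snd s) (snd t)),
                 sec_add (B (fst s) (snd t)) (B (snd s) (fst t)))"

definition csub :: "'m sec \<times> 'm sec \<Rightarrow> 'm sec \<times> 'm sec \<Rightarrow> 'm sec \<times> 'm sec" where
  "csub s t = (sec_sub (fst s) (fst t), sec_sub (snd s) (snd t))"

definition is_canonical_connection ::
  "('m set \<times> ('m \<Rightarrow> 'e::euclidean_space)) set \<Rightarrow> ('m vf \<Rightarrow> 'm vf \<Rightarrow> 'm vf)
     \<Rightarrow> ('m sec \<Rightarrow> 'm sec) \<Rightarrow> ('m sec \<Rightarrow> 'm sec) \<Rightarrow> ('m sec \<Rightarrow> 'm sec \<Rightarrow> 'm sec) \<Rightarrow> bool" where
  "is_canonical_connection A nb J1 J2 D \<longleftrightarrow>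
     gen_affine_connection A D \<and>
     (\<forall>K\<in>{J1, J2, J1 \<circ> J2}. \<forall>\<sigma>\<in>sections A. \<forall>\<tau>\<in>sections A. D \<sigma> (K \<tau>) = K (D \<sigma> \<tau>)) \<and>
     (\<forall>\<sigma>\<in>sections A. \<forall>\<tau>\<in>sections A.
        (let s = (\<sigma>, sec_neg (J1 \<sigma>)); t = (\<tau>, J1 \<tau>)
         in csub (csub (cext D s t) (cext D t s)) (cext (nbracket A nb) s t) = (sec_zero, sec_zero)))"

definition obata ::
  "('m set \<times> ('m \<Rightarrow> 'e::euclidean_space)) set \<Rightarrow> ('m vf \<Rightarrow> 'm vf \<Rightarrow> 'm vf)
     \<Rightarrow> ('m sec \<Rightarrow> 'm sec) \<Rightarrow> ('m sec \<Rightarrow> 'm sec) \<Rightarrow> 'm sec \<Rightarrow> 'm sec \<Rightarrow> 'm sec" where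
  "obata A nb J1 J2 \<sigma> \<tau> =
     (let J3 = J1 \<circ> J2; br = nbracket A nb;
          cyc = (\<lambda>Ja Jb Jc. Ja (sec_add (br (Jb \<sigma>) (Jc \<tau>)) (br (Jb \<tau>) (Jc \<sigma>))));
          dia = (\<lambda>Ja. Ja (sec_add (br (Ja \<sigma>) \<tau>) (br (Ja \<tau>) \<sigma>)));
          t1 = sec_add (sec_add (cyc J1 J2 J3) (cyc J2 J3 J1)) (cyc J3 J1 J2);
          t2 = sec_add (sec_add (dia J1) (dia J2)) (dia J3);
          t3 = sec_add (sec_add (nijenhuis A nb J1 \<sigma> \<tau>) (nijenhuis A nb J2 \<sigma> \<tau>))
                       (nijenhuis A nb J3 \<sigma> \<tau>)
      in sec_add (sec_scale (1/12) (sec_sub (sec_add t1 (sec_scale 2 t2)) t3))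
                 (sec_scale (1/2) (br \<sigma> \<tau>)))"

end

theory Submission
  imports Defs "HOL-Library.Function_Algebras"
begin



definition lc :: "(real \<times> nat) list \<Rightarrow> (nat \<Rightarrow> 'v::real_vector) \<Rightarrow> 'v" where
  "lc xs f = sum_list (map (\<lambda>(c,k). c *\<^sub>R f k) xs)"
definition coef :: "(real \<times> nat) list \<Rightarrow> nat \<Rightarrow> real" where
  "coef xs k = sum_list (map fst (filter (\<lambda>p. snd p = k) xs))"

lemma coef_simps [simp]: "coef [] k = 0" "coef ((c,j)#xs) k = (if j = k then c + coef xs k else coef xs k)"
  by (simp_all add: coef_def)

lemma coef_notin: "k \<notin> set (map snd xs) \<Longrightarrow> coef xs k = 0"
  by (induction xs) (auto simp: coef_def)

lemma lc_coef_gen: "finite K \<Longrightarrow> set (map snd xs) \<subseteq> K \<Longrightarrow> lc xs f = (\<Sum>k\<in>K. coef xs k *\<^sub>R f k)"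
proof (induction xs)
  case Nil then show ?case by (simp add: lc_def coef_def)
next
  case (Cons p xs)
  obtain c j where p: "p = (c,j)" by (cases p)
  have "lc (p#xs) f = c *\<^sub>R f j + lc xs f" by (simp add: lc_def p)
  also have "lc xs f = (\<Sum>k\<in>K. coef xs k *\<^sub>R f k)" using Cons by auto
  also have "c *\<^sub>R f j = (\<Sum>k\<in>K. (if j = k then c else 0) *\<^sub>R f k)"
  proof -
    have jK: "j \<in> K" using Cons.prems p by auto
    have "(\<Sum>k\<in>K. (if j = k then c else 0) *\<^sub>R f k) = (\<Sum>k\<in>K. if j = k then c *\<^sub>R f k else 0)"
      by (rule sum.cong) auto
    also have "\<dots> = c *\<^sub>R f j" using jK Cons.prems(1) by (simp add: sum.delta)
    finally show ?thesis by simp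
  qed
  also have "(\<Sum>k\<in>K. (if j = k then c else 0) *\<^sub>R f k) + (\<Sum>k\<in>K. coef xs k *\<^sub>R f k)
     = (\<Sum>k\<in>K. coef (p#xs) k *\<^sub>R f k)"
    by (simp add: p sum.distrib[symmetric] scaleR_add_left[symmetric]) (rule sum.cong, auto)
  finally show ?case .
qed

lemma lc_eqI:
  assumes "\<forall>k\<in>set (map snd xs) \<union> set (map snd ys). coef xs k = coef ys k"
  shows "lc xs f = lc ys f"
proof -
  let ?K = "set (map snd xs) \<union> set (map snd ys)"
  have "lc xs f = (\<Sum>k\<in>?K. coef xs k *\<^sub>R f k)" by (rule lc_coef_gen) auto
  also have "\<dots> = (\<Sum>k\<in>?K. coef ys k *\<^sub>R f k)" using assms by (intro sum.cong) auto
  also have "\<dots> = lc ys f" by (rule lc_coef_gen[symmetric]) auto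
  finally show ?thesis .
qed

lemma lc_single: "f k = lc [(1,k)] f" by (simp add: lc_def)
lemma lc_add: "lc xs f + lc ys f = lc (xs @ ys) f" by (simp add: lc_def)
lemma lc_neg: "- lc xs f = lc (map (\<lambda>(c,k). (- c, k)) xs) f"
  by (induction xs) (auto simp: lc_def)
lemma lc_diff: "lc xs f - lc ys f = lc (xs @ map (\<lambda>(c,k). (- c, k)) ys) f"
  by (simp add: lc_add[symmetric] lc_neg[symmetric])
lemma lc_scale: "r *\<^sub>R lc xs f = lc (map (\<lambda>(c,k). (r * c, k)) xs) f"
  by (induction xs) (auto simp: lc_def scaleR_add_right)
lemma lc_zero: "0 = lc [] f" by (simp add: lc_def)

lemma lc_eq_iff_diff: "a - b = 0 \<Longrightarrow> a = (b::'v::real_vector)" by simp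

locale qalg =
  fixes S :: "'v::real_vector set" and J1 J2 :: "'v \<Rightarrow> 'v" and br :: "'v \<Rightarrow> 'v \<Rightarrow> 'v"
  assumes add_S: "x\<in>S \<Longrightarrow> y\<in>S \<Longrightarrow> x+y\<in>S"
   and scale_S: "x\<in>S \<Longrightarrow> c *\<^sub>R x \<in> S"
   and J1_S: "x\<in>S \<Longrightarrow> J1 x \<in> S"
   and J2_S: "x\<in>S \<Longrightarrow> J2 x \<in> S"
   and br_S: "x\<in>S \<Longrightarrow> y\<in>S \<Longrightarrow> br x y \<in> S"
   and J1_add: "x\<in>S \<Longrightarrow> y\<in>S \<Longrightarrow> J1 (x+y) = J1 x + J1 y"
   and J2_add: "x\<in>S \<Longrightarrow> y\<in>S \<Longrightarrow> J2 (x+y) = J2 x + J2 y"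
   and J1_scale: "x\<in>S \<Longrightarrow> J1 (c *\<^sub>R x) = c *\<^sub>R J1 x"
   and J2_scale: "x\<in>S \<Longrightarrow> J2 (c *\<^sub>R x) = c *\<^sub>R J2 x"
   and J1J1: "x\<in>S \<Longrightarrow> J1 (J1 x) = - x"
   and J2J2: "x\<in>S \<Longrightarrow> J2 (J2 x) = - x"
   and J1J2: "x\<in>S \<Longrightarrow> J1 (J2 x) = - J2 (J1 x)"
   and br_add: "x\<in>S \<Longrightarrow> y\<in>S \<Longrightarrow> z\<in>S \<Longrightarrow> br (x+y) z = br x z + br y z"
   and br_scale: "x\<in>S \<Longrightarrow> y\<in>S \<Longrightarrow> br (c *\<^sub>R x) y = c *\<^sub>R br x y"
   and br_anti: "br x y = - br y x"
   and N1: "x\<in>S \<Longrightarrow> y\<in>S \<Longrightarrow> br (J1 x) (J1 y) - J1 (br (J1 x) y) - J1 (br x (J1 y)) + J1 (J1 (br x y)) = 0"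
   and N2: "x\<in>S \<Longrightarrow> y\<in>S \<Longrightarrow> br (J2 x) (J2 y) - J2 (br (J2 x) y) - J2 (br x (J2 y)) + J2 (J2 (br x y)) = 0"
   and N3: "x\<in>S \<Longrightarrow> y\<in>S \<Longrightarrow> br (J1 (J2 x)) (J1 (J2 y)) - J1 (J2 (br (J1 (J2 x)) y)) - J1 (J2 (br x (J1 (J2 y)))) + J1 (J2 (J1 (J2 (br x y)))) = 0"
begin

lemma zero_S: "x \<in> S \<Longrightarrow> 0 \<in> S" using scale_S[of x 0] by simp
lemma neg_S: "x\<in>S \<Longrightarrow> - x \<in> S" using scale_S[of x "-1"] by simp
lemma diff_S: "x\<in>S \<Longrightarrow> y\<in>S \<Longrightarrow> x - y \<in> S" using add_S neg_S by (metis diff_conv_add_uminus)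
lemma J1_neg: "x\<in>S \<Longrightarrow> J1 (- x) = - J1 x" using J1_scale[of x "-1"] by simp
lemma J2_neg: "x\<in>S \<Longrightarrow> J2 (- x) = - J2 x" using J2_scale[of x "-1"] by simp
lemma J1_diff: "x\<in>S \<Longrightarrow> y\<in>S \<Longrightarrow> J1 (x - y) = J1 x - J1 y" by (simp only: diff_conv_add_uminus J1_add J1_neg neg_S)
lemma J2_diff: "x\<in>S \<Longrightarrow> y\<in>S \<Longrightarrow> J2 (x - y) = J2 x - J2 y" by (simp only: diff_conv_add_uminus J2_add J2_neg neg_S)
lemma br_add2: "x\<in>S \<Longrightarrow> y\<in>S \<Longrightarrow> z\<in>S \<Longrightarrow> br z (x+y) = br z x + br z y"
  by (metis br_anti br_add minus_add_distrib)
lemma br_scale2: "x\<in>S \<Longrightarrow> y\<in>S \<Longrightarrow> br y (c *\<^sub>R x) = c *\<^sub>R br y x"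
  by (metis br_anti br_scale scaleR_minus_right)
lemma br_neg: "x\<in>S \<Longrightarrow> y\<in>S \<Longrightarrow> br (- x) y = - br x y" using br_scale[of x y "-1"] by simp
lemma br_neg2: "x\<in>S \<Longrightarrow> y\<in>S \<Longrightarrow> br y (- x) = - br y x" using br_scale2[of x y "-1"] by simp
lemma br_diff: "x\<in>S \<Longrightarrow> y\<in>S \<Longrightarrow> z\<in>S \<Longrightarrow> br (x-y) z = br x z - br y z"
  by (simp only: diff_conv_add_uminus br_add br_neg neg_S)
lemma br_diff2: "x\<in>S \<Longrightarrow> y\<in>S \<Longrightarrow> z\<in>S \<Longrightarrow> br z (x-y) = br z x - br z y"
  by (simp only: diff_conv_add_uminus br_add2 br_neg2 neg_S)
lemma J1_zero: "x\<in>S \<Longrightarrow> J1 0 = 0" using J1_scale[of x 0] by simp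
lemma J2_zero: "x\<in>S \<Longrightarrow> J2 0 = 0" using J2_scale[of x 0] by simp
lemma J2J1: "x\<in>S \<Longrightarrow> J2 (J1 x) = - J1 (J2 x)" by (simp add: J1J2)

lemmas lin = add_S scale_S J1_S J2_S br_S neg_S diff_S zero_S J1_add J2_add J1_scale J2_scale J1J1 J2J2 J2J1
  J1_neg J2_neg J1_diff J2_diff br_add br_add2 br_scale br_scale2 br_neg br_neg2 br_diff br_diff2

definition D0 :: "'v \<Rightarrow> 'v \<Rightarrow> 'v" where
 "D0 x y = (let J3 = (\<lambda>z. J1 (J2 z));
      cyc = (\<lambda>Ja Jb Jc. Ja (br (Jb x) (Jc y) + br (Jb y) (Jc x)));
      dia = (\<lambda>Ja. Ja (br (Ja x) y + br (Ja y) x));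
      t1 = cyc J1 J2 J3 + cyc J2 J3 J1 + cyc J3 J1 J2;
      t2 = dia J1 + dia J2 + dia J3
    in (1/12) *\<^sub>R (t1 + 2 *\<^sub>R t2) + (1/2) *\<^sub>R br x y)"

definition wd :: "nat \<Rightarrow> 'v \<Rightarrow> 'v" where
  "wd n z = (if n = 0 then z else if n = 1 then J1 z else if n = 2 then J2 z else J1 (J2 z))"
definition A :: "'v \<Rightarrow> 'v \<Rightarrow> nat \<Rightarrow> 'v" where
  "A x y k = wd (k div 16) (br (wd (k div 4 mod 4) x) (wd (k mod 4) y))"
lemma wd_S: "z \<in> S \<Longrightarrow> wd n z \<in> S" by (simp add: wd_def J1_S J2_S)
lemma A_S [simp]: "x \<in> S \<Longrightarrow> y \<in> S \<Longrightarrow> A x y k \<in> S" by (simp add: A_def wd_S br_S)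

lemma brA_0_0: "x \<in> S \<Longrightarrow> y \<in> S \<Longrightarrow> br x y = A x y 0"
  by (simp add: A_def wd_def)
lemma brA_0_0_rev: "x \<in> S \<Longrightarrow> y \<in> S \<Longrightarrow> br y x = - A x y 0"
  by (subst br_anti) (simp add: A_def wd_def)
lemma brA_0_1: "x \<in> S \<Longrightarrow> y \<in> S \<Longrightarrow> br x (J1 y) = A x y 1"
  by (simp add: A_def wd_def)
lemma brA_0_1_rev: "x \<in> S \<Longrightarrow> y \<in> S \<Longrightarrow> br (J1 y) x = - A x y 1"
  by (subst br_anti) (simp add: A_def wd_def)
lemma brA_0_2: "x \<in> S \<Longrightarrow> y \<in> S \<Longrightarrow> br x (J2 y) = A x y 2"
  by (simp add: A_def wd_def)
lemma brA_0_2_rev: "x \<in> S \<Longrightarrow> y \<in> S \<Longrightarrow> br (J2 y) x = - A x y 2"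
  by (subst br_anti) (simp add: A_def wd_def)
lemma brA_0_3: "x \<in> S \<Longrightarrow> y \<in> S \<Longrightarrow> br x (J1 (J2 y)) = A x y 3"
  by (simp add: A_def wd_def)
lemma brA_0_3_rev: "x \<in> S \<Longrightarrow> y \<in> S \<Longrightarrow> br (J1 (J2 y)) x = - A x y 3"
  by (subst br_anti) (simp add: A_def wd_def)
lemma brA_1_0: "x \<in> S \<Longrightarrow> y \<in> S \<Longrightarrow> br (J1 x) y = A x y 4"
  by (simp add: A_def wd_def)
lemma brA_1_0_rev: "x \<in> S \<Longrightarrow> y \<in> S \<Longrightarrow> br y (J1 x) = - A x y 4"
  by (subst br_anti) (simp add: A_def wd_def)
lemma brA_1_1: "x \<in> S \<Longrightarrow> y \<in> S \<Longrightarrow> br (J1 x) (J1 y) = A x y 5"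
  by (simp add: A_def wd_def)
lemma brA_1_1_rev: "x \<in> S \<Longrightarrow> y \<in> S \<Longrightarrow> br (J1 y) (J1 x) = - A x y 5"
  by (subst br_anti) (simp add: A_def wd_def)
lemma brA_1_2: "x \<in> S \<Longrightarrow> y \<in> S \<Longrightarrow> br (J1 x) (J2 y) = A x y 6"
  by (simp add: A_def wd_def)
lemma brA_1_2_rev: "x \<in> S \<Longrightarrow> y \<in> S \<Longrightarrow> br (J2 y) (J1 x) = - A x y 6"
  by (subst br_anti) (simp add: A_def wd_def)
lemma brA_1_3: "x \<in> S \<Longrightarrow> y \<in> S \<Longrightarrow> br (J1 x) (J1 (J2 y)) = A x y 7"
  by (simp add: A_def wd_def)
lemma brA_1_3_rev: "x \<in> S \<Longrightarrow> y \<in> S \<Longrightarrow> br (J1 (J2 y)) (J1 x) = - A x y 7"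
  by (subst br_anti) (simp add: A_def wd_def)
lemma brA_2_0: "x \<in> S \<Longrightarrow> y \<in> S \<Longrightarrow> br (J2 x) y = A x y 8"
  by (simp add: A_def wd_def)
lemma brA_2_0_rev: "x \<in> S \<Longrightarrow> y \<in> S \<Longrightarrow> br y (J2 x) = - A x y 8"
  by (subst br_anti) (simp add: A_def wd_def)
lemma brA_2_1: "x \<in> S \<Longrightarrow> y \<in> S \<Longrightarrow> br (J2 x) (J1 y) = A x y 9"
  by (simp add: A_def wd_def)
lemma brA_2_1_rev: "x \<in> S \<Longrightarrow> y \<in> S \<Longrightarrow> br (J1 y) (J2 x) = - A x y 9"
  by (subst br_anti) (simp add: A_def wd_def)
lemma brA_2_2: "x \<in> S \<Longrightarrow> y \<in> S \<Longrightarrow> br (J2 x) (J2 y) = A x y 10"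
  by (simp add: A_def wd_def)
lemma brA_2_2_rev: "x \<in> S \<Longrightarrow> y \<in> S \<Longrightarrow> br (J2 y) (J2 x) = - A x y 10"
  by (subst br_anti) (simp add: A_def wd_def)
lemma brA_2_3: "x \<in> S \<Longrightarrow> y \<in> S \<Longrightarrow> br (J2 x) (J1 (J2 y)) = A x y 11"
  by (simp add: A_def wd_def)
lemma brA_2_3_rev: "x \<in> S \<Longrightarrow> y \<in> S \<Longrightarrow> br (J1 (J2 y)) (J2 x) = - A x y 11"
  by (subst br_anti) (simp add: A_def wd_def)
lemma brA_3_0: "x \<in> S \<Longrightarrow> y \<in> S \<Longrightarrow> br (J1 (J2 x)) y = A x y 12"
  by (simp add: A_def wd_def)
lemma brA_3_0_rev: "x \<in> S \<Longrightarrow> y \<in> S \<Longrightarrow> br y (J1 (J2 x)) = - A x y 12"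
  by (subst br_anti) (simp add: A_def wd_def)
lemma brA_3_1: "x \<in> S \<Longrightarrow> y \<in> S \<Longrightarrow> br (J1 (J2 x)) (J1 y) = A x y 13"
  by (simp add: A_def wd_def)
lemma brA_3_1_rev: "x \<in> S \<Longrightarrow> y \<in> S \<Longrightarrow> br (J1 y) (J1 (J2 x)) = - A x y 13"
  by (subst br_anti) (simp add: A_def wd_def)
lemma brA_3_2: "x \<in> S \<Longrightarrow> y \<in> S \<Longrightarrow> br (J1 (J2 x)) (J2 y) = A x y 14"
  by (simp add: A_def wd_def)
lemma brA_3_2_rev: "x \<in> S \<Longrightarrow> y \<in> S \<Longrightarrow> br (J2 y) (J1 (J2 x)) = - A x y 14"
  by (subst br_anti) (simp add: A_def wd_def)
lemma brA_3_3: "x \<in> S \<Longrightarrow> y \<in> S \<Longrightarrow> br (J1 (J2 x)) (J1 (J2 y)) = A x y 15"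
  by (simp add: A_def wd_def)
lemma brA_3_3_rev: "x \<in> S \<Longrightarrow> y \<in> S \<Longrightarrow> br (J1 (J2 y)) (J1 (J2 x)) = - A x y 15"
  by (subst br_anti) (simp add: A_def wd_def)
lemma JA:
  assumes "x \<in> S" "y \<in> S"
  shows "k < 16 \<Longrightarrow> J1 (A x y k) = A x y (k+16)"
    "16 \<le> k \<Longrightarrow> k < 32 \<Longrightarrow> J1 (A x y k) = - A x y (k-16)"
    "32 \<le> k \<Longrightarrow> k < 48 \<Longrightarrow> J1 (A x y k) = A x y (k+16)"
    "48 \<le> k \<Longrightarrow> k < 64 \<Longrightarrow> J1 (A x y k) = - A x y (k-16)"
    "k < 16 \<Longrightarrow> J2 (A x y k) = A x y (k+32)"
    "16 \<le> k \<Longrightarrow> k < 32 \<Longrightarrow> J2 (A x y k) = - A x y (k+32)"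
    "32 \<le> k \<Longrightarrow> k < 48 \<Longrightarrow> J2 (A x y k) = - A x y (k-32)"
    "48 \<le> k \<Longrightarrow> k < 64 \<Longrightarrow> J2 (A x y k) = A x y (k-32)"
  using assms by (auto simp: A_def wd_def J1_S J2_S br_S J1J1 J2J2 J2J1 J1_neg J2_neg
     div_add_self2 le_div_geq mod_add_self2 le_mod_geq)

lemmas brA = brA_0_0 brA_0_0_rev brA_0_1 brA_0_1_rev brA_0_2 brA_0_2_rev brA_0_3 brA_0_3_rev brA_1_0 brA_1_0_rev brA_1_1 brA_1_1_rev brA_1_2 brA_1_2_rev brA_1_3 brA_1_3_rev brA_2_0 brA_2_0_rev brA_2_1 brA_2_1_rev brA_2_2 brA_2_2_rev brA_2_3 brA_2_3_rev brA_3_0 brA_3_0_rev brA_3_1 brA_3_1_rev brA_3_2 brA_3_2_rev brA_3_3 brA_3_3_rev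

definition DLst :: "(real \<times> nat) list" where "DLst = [((1/2), 0), ((-1/6), 17), ((1/6), 20), ((1/12), 27), ((-1/12), 30), ((-1/6), 34), ((-1/12), 39), ((1/6), 40), ((1/12), 45), ((-1/6), 51), ((1/12), 54), ((-1/12), 57), ((1/6), 60)]"

lemma D0_lc: assumes x: "x\<in>S" and y: "y\<in>S" shows "D0 x y = lc DLst (A x y)"
  using x y unfolding D0_def Let_def DLst_def
  apply (simp add: lin brA[OF x y] JA[OF x y])
  apply (simp only: lc_single[of "A x y"] lc_add lc_diff lc_neg lc_scale lc_zero)
  apply (rule lc_eqI)
  apply simp
  done

lemma compat1_aux:
  assumes x: "x\<in>S" and y: "y\<in>S"
  shows "D0 x (J1 y) - J1 (D0 x y) = (-1/6) *\<^sub>R (br (J1 ((x))) (J1 (J1 (y))) - J1 (br (J1 ((x))) (J1 (y))) - J1 (br ((x)) (J1 (J1 (y)))) + J1 (J1 (br ((x)) (J1 (y))))) + (-1/12) *\<^sub>R (br (J2 ((x))) (J2 (J1 (y))) - J2 (br (J2 ((x))) (J1 (y))) - J2 (br ((x)) (J2 (J1 (y)))) + J2 (J2 (br ((x)) (J1 (y))))) + (-1/12) *\<^sub>R (br (J1 (J2 ((x)))) (J1 (J2 (J1 (y)))) - J1 (J2 (br (J1 (J2 ((x)))) (J1 (y)))) - J1 (J2 (br ((x)) (J1 (J2 (J1 (y)))))) + J1 (J2 (J1 (J2 (br ((x)) (J1 (y))))))) + (1/12) *\<^sub>R J1 (br (J2 ((x))) (J2 ((y))) - J2 (br (J2 ((x)))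 ((y))) - J2 (br ((x)) (J2 ((y)))) + J2 (J2 (br ((x)) ((y))))) + (1/12) *\<^sub>R J1 (br (J1 (J2 ((x)))) (J1 (J2 ((y)))) - J1 (J2 (br (J1 (J2 ((x)))) ((y)))) - J1 (J2 (br ((x)) (J1 (J2 ((y)))))) + J1 (J2 (J1 (J2 (br ((x)) ((y)))))))"
  using x y unfolding D0_def Let_def
  apply (simp add: lin brA[OF x y] JA[OF x y])
  apply (simp only: lc_single[of "A x y"] lc_add lc_diff lc_neg lc_scale lc_zero)
  apply (rule lc_eqI)
  apply simp
  done

lemma compat1:
  assumes x: "x\<in>S" and y: "y\<in>S"
  shows "D0 x (J1 y) = J1 (D0 x y)"
proof -
  have "D0 x (J1 y) - J1 (D0 x y) = 0"
    unfolding compat1_aux[OF x y]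
    by (simp only: N1 N2 N3 x y J1_S J2_S br_S J1_zero[OF x] J2_zero[OF x] scaleR_zero_right add_0_right)
  then show ?thesis by simp
qed

lemma compat2_aux:
  assumes x: "x\<in>S" and y: "y\<in>S"
  shows "D0 x (J2 y) - J2 (D0 x y) = (-1/12) *\<^sub>R (br (J1 ((x))) (J1 (J2 (y))) - J1 (br (J1 ((x))) (J2 (y))) - J1 (br ((x)) (J1 (J2 (y)))) + J1 (J1 (br ((x)) (J2 (y))))) + (-1/6) *\<^sub>R (br (J2 ((x))) (J2 (J2 (y))) - J2 (br (J2 ((x))) (J2 (y))) - J2 (br ((x)) (J2 (J2 (y)))) + J2 (J2 (br ((x)) (J2 (y))))) + (-1/12) *\<^sub>R (br (J1 (J2 ((x)))) (J1 (J2 (J2 (y)))) - J1 (J2 (br (J1 (J2 ((x)))) (J2 (y)))) - J1 (J2 (br ((x)) (J1 (J2 (J2 (y)))))) + J1 (J2 (J1 (J2 (br ((x)) (J2 (y))))))) + (-1/12) *\<^sub>R (br (J2 (J1 (x))) (J2 (J1 (J2 (y)))) - J2 (br (J2 (J1 (x))) (J1 (J2 (y)))) - J2 (br (J1 (x)) (J2 (J1 (J2 (y))))) + J2 (J2 (br (J1 (x)) (J1 (J2 (y)))))) + (1/12) *\<^sub>R (br (J1 (J2 (J1 (x)))) (J1 (J2 (J1 (J2 (y))))) - J1 (J2 (br (J1 (J2 (J1 (x)))) (J1 (J2 (y))))) - J1 (J2 (br (J1 (x)) (J1 (J2 (J1 (J2 (y))))))) + J1 (J2 (J1 (J2 (br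 (J1 (x)) (J1 (J2 (y)))))))) + (-1/12) *\<^sub>R J1 (br (J2 ((x))) (J2 (J1 (J2 (y)))) - J2 (br (J2 ((x))) (J1 (J2 (y)))) - J2 (br ((x)) (J2 (J1 (J2 (y))))) + J2 (J2 (br ((x)) (J1 (J2 (y)))))) + (-1/12) *\<^sub>R (br (J1 (J2 (x))) (J1 ((y))) - J1 (br (J1 (J2 (x))) ((y))) - J1 (br (J2 (x)) (J1 ((y)))) + J1 (J1 (br (J2 (x)) ((y))))) + (1/6) *\<^sub>R J1 (br (J1 (J2 ((x)))) (J1 (J2 (J1 (J2 (y))))) - J1 (J2 (br (J1 (J2 ((x)))) (J1 (J2 (y))))) - J1 (J2 (br ((x)) (J1 (J2 (J1 (J2 (y))))))) + J1 (J2 (J1 (J2 (br ((x)) (J1 (J2 (y))))))))"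
  using x y unfolding D0_def Let_def
  apply (simp add: lin brA[OF x y] JA[OF x y])
  apply (simp only: lc_single[of "A x y"] lc_add lc_diff lc_neg lc_scale lc_zero)
  apply (rule lc_eqI)
  apply simp
  done

lemma compat2:
  assumes x: "x\<in>S" and y: "y\<in>S"
  shows "D0 x (J2 y) = J2 (D0 x y)"
proof -
  have "D0 x (J2 y) - J2 (D0 x y) = 0"
    unfolding compat2_aux[OF x y]
    by (simp only: N1 N2 N3 x y J1_S J2_S br_S J1_zero[OF x] J2_zero[OF x] scaleR_zero_right add_0_right)
  then show ?thesis by simp
qed

lemma D0_S: "x\<in>S \<Longrightarrow> y\<in>S \<Longrightarrow> D0 x y \<in> S"
  unfolding D0_def Let_def by (simp add: lin)

lemma tor_real:
  assumes x: "x\<in>S" and y: "y\<in>S"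
  shows "(D0 x y - D0 (- J1 x) (J1 y)) - (D0 y x - D0 (J1 y) (- J1 x)) - (br x y - br (- J1 x) (J1 y)) = 0"
  using x y unfolding D0_def Let_def
  apply (simp add: lin brA[OF x y] JA[OF x y])
  apply (simp only: lc_single[of "A x y"] lc_add lc_diff lc_neg lc_scale lc_zero)
  apply (rule lc_eqI)
  apply simp
  done

lemma tor_imag:
  assumes x: "x\<in>S" and y: "y\<in>S"
  shows "(D0 x (J1 y) + D0 (- J1 x) y) - (D0 y (- J1 x) + D0 (J1 y) x) - (br x (J1 y) + br (- J1 x) y) = 0"
  using x y unfolding D0_def Let_def
  apply (simp add: lin brA[OF x y] JA[OF x y])
  apply (simp only: lc_single[of "A x y"] lc_add lc_diff lc_neg lc_scale lc_zero)
  apply (rule lc_eqI)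
  apply simp
  done


lemma A_add1: "x\<in>S \<Longrightarrow> x'\<in>S \<Longrightarrow> y\<in>S \<Longrightarrow> A (x+x') y k = A x y k + A x' y k"
  unfolding A_def wd_def by (auto simp: lin)
lemma A_add2: "x\<in>S \<Longrightarrow> y\<in>S \<Longrightarrow> y'\<in>S \<Longrightarrow> A x (y+y') k = A x y k + A x y' k"
  unfolding A_def wd_def by (auto simp: lin)
lemma A_neg1: "x\<in>S \<Longrightarrow> y\<in>S \<Longrightarrow> A (- x) y k = - A x y k"
  unfolding A_def wd_def by (auto simp: lin)

lemma lc_plus_fun: "lc xs (\<lambda>k. f k + g k) = lc xs f + lc xs g"
  by (induction xs) (auto simp: lc_def scaleR_add_right)
lemma lc_uminus_fun: "lc xs (\<lambda>k. - f k) = - lc xs f"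
  by (induction xs) (auto simp: lc_def)

lemma D0_add1: "x\<in>S \<Longrightarrow> x'\<in>S \<Longrightarrow> y\<in>S \<Longrightarrow> D0 (x+x') y = D0 x y + D0 x' y"
proof -
  assume a: "x\<in>S" "x'\<in>S" "y\<in>S"
  then have "A (x+x') y = (\<lambda>k. A x y k + A x' y k)" by (simp add: A_add1 fun_eq_iff)
  then show ?thesis using a by (simp add: D0_lc add_S lc_plus_fun)
qed
lemma D0_add2: "x\<in>S \<Longrightarrow> y\<in>S \<Longrightarrow> y'\<in>S \<Longrightarrow> D0 x (y+y') = D0 x y + D0 x y'"
proof -
  assume a: "x\<in>S" "y\<in>S" "y'\<in>S"
  then have "A x (y+y') = (\<lambda>k. A x y k + A x y' k)" by (simp add: A_add2 fun_eq_iff)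
  then show ?thesis using a by (simp add: D0_lc add_S lc_plus_fun)
qed
lemma D0_neg1: "x\<in>S \<Longrightarrow> y\<in>S \<Longrightarrow> D0 (- x) y = - D0 x y"
proof -
  assume a: "x\<in>S" "y\<in>S"
  then have "A (- x) y = (\<lambda>k. - A x y k)" by (simp add: A_neg1 fun_eq_iff)
  then show ?thesis using a by (simp add: D0_lc neg_S lc_uminus_fun)
qed

lemma compat3: "x\<in>S \<Longrightarrow> y\<in>S \<Longrightarrow> D0 x (J1 (J2 y)) = J1 (J2 (D0 x y))"
  by (simp add: compat1 compat2 J2_S)

lemma unique:
  assumes DS: "\<And>a b. a\<in>S \<Longrightarrow> b\<in>S \<Longrightarrow> D' a b \<in> S"
    and DJ1: "\<And>a b. a\<in>S \<Longrightarrow> b\<in>S \<Longrightarrow> D' a (J1 b) = J1 (D' a b)"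
    and DJ2: "\<And>a b. a\<in>S \<Longrightarrow> b\<in>S \<Longrightarrow> D' a (J2 b) = J2 (D' a b)"
    and Dneg: "\<And>a b. a\<in>S \<Longrightarrow> b\<in>S \<Longrightarrow> D' (- a) b = - D' a b"
    and Dtor: "\<And>a b. a\<in>S \<Longrightarrow> b\<in>S \<Longrightarrow>
       (D' a b - D' (- J1 a) (J1 b)) - (D' b a - D' (J1 b) (- J1 a)) - (br a b - br (- J1 a) (J1 b)) = 0"
    and x: "x\<in>S" and y: "y\<in>S"
  shows "D' x y = D0 x y"
proof -
  define Sd where "Sd a b = D' a b - D0 a b" for a b
  have SdS: "Sd a b \<in> S" if "a\<in>S" "b\<in>S" for a b
    using that by (simp add: Sd_def DS D0_S diff_S)
  have SdJ1: "Sd a (J1 b) = J1 (Sd a b)" if "a\<in>S" "b\<in>S" for a b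
    using that by (simp add: Sd_def DJ1 compat1 J1_diff DS D0_S)
  have SdJ2: "Sd a (J2 b) = J2 (Sd a b)" if "a\<in>S" "b\<in>S" for a b
    using that by (simp add: Sd_def DJ2 compat2 J2_diff DS D0_S)
  have Sdneg: "Sd (- a) b = - Sd a b" if "a\<in>S" "b\<in>S" for a b
    using that by (simp add: Sd_def Dneg D0_neg1)
  have Sdneg2: "Sd a (- b) = - Sd a b" if "a\<in>S" "b\<in>S" for a b
  proof -
    have "Sd a (- b) = Sd a (J1 (J1 b))" using that by (simp add: J1J1)
    also have "\<dots> = J1 (J1 (Sd a b))" using that by (simp add: SdJ1 J1_S)
    also have "\<dots> = - Sd a b" using that by (simp add: J1J1 SdS)
    finally show ?thesis .
  qed
  have star: "Sd a b + Sd (J1 a) (J1 b) - Sd b a - Sd (J1 b) (J1 a) = 0" if "a\<in>S" "b\<in>S" for a b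
  proof -
    have "(D' a b - D' (- J1 a) (J1 b)) - (D' b a - D' (J1 b) (- J1 a)) - (br a b - br (- J1 a) (J1 b))
       - ((D0 a b - D0 (- J1 a) (J1 b)) - (D0 b a - D0 (J1 b) (- J1 a)) - (br a b - br (- J1 a) (J1 b))) = 0"
      using Dtor[OF that] tor_real[OF that] by simp
    then have "Sd a b - Sd (- J1 a) (J1 b) - Sd b a + Sd (J1 b) (- J1 a) = 0"
      unfolding Sd_def by (simp add: algebra_simps)
    then show ?thesis using that by (simp add: Sdneg Sdneg2 J1_S algebra_simps)
  qed
  define P where "P a b = Sd a b + J1 (Sd (J1 a) b)" for a b
  have P0: "P a b = 0" if "a\<in>S" "b\<in>S" for a b
  proof -
    have e1: "P a b - P b a = 0"
      using star[OF that] that by (simp add: P_def SdJ1 J1_S algebra_simps)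
    have "Sd a (J1 b) + Sd (J1 a) (J1 (J1 b)) - Sd (J1 b) a - Sd (J1 (J1 b)) (J1 a) = 0"
      using star[of a "J1 b"] that by (simp add: J1_S)
    then have "J1 (Sd a b) - Sd (J1 a) b - Sd (J1 b) a + J1 (Sd b a) = 0"
      using that by (simp add: J1J1 SdJ1 Sdneg Sdneg2 J1_S algebra_simps)
    then have "J1 (J1 (Sd a b) - Sd (J1 a) b - Sd (J1 b) a + J1 (Sd b a)) = 0"
      using that J1_zero by simp
    moreover have "J1 (J1 (Sd a b) - Sd (J1 a) b - Sd (J1 b) a + J1 (Sd b a)) = - (P a b + P b a)"
      using that by (simp add: P_def lin SdS J1J1 algebra_simps)
    ultimately have e2: "P a b + P b a = 0" by (metis neg_equal_0_iff_equal)
    from e1 e2 have "2 *\<^sub>R P a b = 0" by (simp add: algebra_simps scaleR_2)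
    then show ?thesis by simp
  qed
  have Q0: "Sd a b - J1 (Sd (J1 a) b) = 0" if "a\<in>S" "b\<in>S" for a b
  proof -
    have "P a (J2 b) = J2 (Sd a b - J1 (Sd (J1 a) b))"
      using that by (simp add: P_def SdJ2 J1_S J2_S lin SdS)
    then have "J2 (J2 (Sd a b - J1 (Sd (J1 a) b))) = J2 0"
      using P0[of a "J2 b"] that J2_S by simp
    then show ?thesis using that by (simp add: J2J2 lin SdS J2_zero)
  qed
  have "2 *\<^sub>R Sd x y = 0"
    using P0[OF x y] Q0[OF x y] by (simp add: P_def algebra_simps scaleR_2)
  then show ?thesis by (simp add: Sd_def)
qed

end

locale qalg_sm = qalg S J1 J2 br for S :: "'v::real_vector set" and J1 J2 br +
  fixes F :: "'f set" and sm :: "'f \<Rightarrow> 'v \<Rightarrow> 'v" and anc :: "'v \<Rightarrow> 'f \<Rightarrow> 'f"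
  assumes sm_S: "f\<in>F \<Longrightarrow> x\<in>S \<Longrightarrow> sm f x \<in> S"
    and anc_F: "x\<in>S \<Longrightarrow> f\<in>F \<Longrightarrow> anc x f \<in> F"
    and J1_sm: "f\<in>F \<Longrightarrow> x\<in>S \<Longrightarrow> J1 (sm f x) = sm f (J1 x)"
    and J2_sm: "f\<in>F \<Longrightarrow> x\<in>S \<Longrightarrow> J2 (sm f x) = sm f (J2 x)"
    and sm_add: "sm f (x + y) = sm f x + sm f y"
    and sm_scale: "sm f (c *\<^sub>R x) = c *\<^sub>R sm f x"
    and br_sm: "x\<in>S \<Longrightarrow> y\<in>S \<Longrightarrow> f\<in>F \<Longrightarrow> br x (sm f y) = sm (anc x f) y + sm f (br x y)"
begin

lemma sm_neg: "sm f (- x) = - sm f x" using sm_scale[of f "-1" x] by simp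
lemma sm_diff: "sm f (x - y) = sm f x - sm f y" by (simp only: diff_conv_add_uminus sm_add sm_neg)
lemma br_sm_left: "x\<in>S \<Longrightarrow> y\<in>S \<Longrightarrow> f\<in>F \<Longrightarrow> br (sm f y) x = sm f (br y x) - sm (anc x f) y"
  by (subst br_anti) (simp add: br_sm sm_neg br_anti[of x y])

lemmas smlin = sm_S anc_F J1_sm J2_sm sm_add sm_scale sm_neg sm_diff br_sm br_sm_left

definition B :: "'v \<Rightarrow> 'v \<Rightarrow> 'f \<Rightarrow> nat \<Rightarrow> 'v" where
  "B x y f k = (if k < 64 then sm f (A x y k) else if k < 80 then sm (anc (wd ((k-64) div 4) x) f) (wd ((k-64) mod 4) y)
     else sm (anc (wd ((k-80) mod 4) y) f) (wd ((k-80) div 4) x))"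

lemma BA_0: "sm f (A x y 0) = B x y f 0" by (simp add: B_def)
lemma BA_1: "sm f (A x y 1) = B x y f 1" by (simp add: B_def)
lemma BA_2: "sm f (A x y 2) = B x y f 2" by (simp add: B_def)
lemma BA_3: "sm f (A x y 3) = B x y f 3" by (simp add: B_def)
lemma BA_4: "sm f (A x y 4) = B x y f 4" by (simp add: B_def)
lemma BA_5: "sm f (A x y 5) = B x y f 5" by (simp add: B_def)
lemma BA_6: "sm f (A x y 6) = B x y f 6" by (simp add: B_def)
lemma BA_7: "sm f (A x y 7) = B x y f 7" by (simp add: B_def)
lemma BA_8: "sm f (A x y 8) = B x y f 8" by (simp add: B_def)
lemma BA_9: "sm f (A x y 9) = B x y f 9" by (simp add: B_def)
lemma BA_10: "sm f (A x y 10) = B x y f 10" by (simp add: B_def)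
lemma BA_11: "sm f (A x y 11) = B x y f 11" by (simp add: B_def)
lemma BA_12: "sm f (A x y 12) = B x y f 12" by (simp add: B_def)
lemma BA_13: "sm f (A x y 13) = B x y f 13" by (simp add: B_def)
lemma BA_14: "sm f (A x y 14) = B x y f 14" by (simp add: B_def)
lemma BA_15: "sm f (A x y 15) = B x y f 15" by (simp add: B_def)
lemma BA_16: "sm f (A x y 16) = B x y f 16" by (simp add: B_def)
lemma BA_17: "sm f (A x y 17) = B x y f 17" by (simp add: B_def)
lemma BA_18: "sm f (A x y 18) = B x y f 18" by (simp add: B_def)
lemma BA_19: "sm f (A x y 19) = B x y f 19" by (simp add: B_def)
lemma BA_20: "sm f (A x y 20) = B x y f 20" by (simp add: B_def)
lemma BA_21: "sm f (A x y 21) = B x y f 21" by (simp add: B_def)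
lemma BA_22: "sm f (A x y 22) = B x y f 22" by (simp add: B_def)
lemma BA_23: "sm f (A x y 23) = B x y f 23" by (simp add: B_def)
lemma BA_24: "sm f (A x y 24) = B x y f 24" by (simp add: B_def)
lemma BA_25: "sm f (A x y 25) = B x y f 25" by (simp add: B_def)
lemma BA_26: "sm f (A x y 26) = B x y f 26" by (simp add: B_def)
lemma BA_27: "sm f (A x y 27) = B x y f 27" by (simp add: B_def)
lemma BA_28: "sm f (A x y 28) = B x y f 28" by (simp add: B_def)
lemma BA_29: "sm f (A x y 29) = B x y f 29" by (simp add: B_def)
lemma BA_30: "sm f (A x y 30) = B x y f 30" by (simp add: B_def)
lemma BA_31: "sm f (A x y 31) = B x y f 31" by (simp add: B_def)
lemma BA_32: "sm f (A x y 32) = B x y f 32" by (simp add: B_def)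
lemma BA_33: "sm f (A x y 33) = B x y f 33" by (simp add: B_def)
lemma BA_34: "sm f (A x y 34) = B x y f 34" by (simp add: B_def)
lemma BA_35: "sm f (A x y 35) = B x y f 35" by (simp add: B_def)
lemma BA_36: "sm f (A x y 36) = B x y f 36" by (simp add: B_def)
lemma BA_37: "sm f (A x y 37) = B x y f 37" by (simp add: B_def)
lemma BA_38: "sm f (A x y 38) = B x y f 38" by (simp add: B_def)
lemma BA_39: "sm f (A x y 39) = B x y f 39" by (simp add: B_def)
lemma BA_40: "sm f (A x y 40) = B x y f 40" by (simp add: B_def)
lemma BA_41: "sm f (A x y 41) = B x y f 41" by (simp add: B_def)
lemma BA_42: "sm f (A x y 42) = B x y f 42" by (simp add: B_def)
lemma BA_43: "sm f (A x y 43) = B x y f 43" by (simp add: B_def)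
lemma BA_44: "sm f (A x y 44) = B x y f 44" by (simp add: B_def)
lemma BA_45: "sm f (A x y 45) = B x y f 45" by (simp add: B_def)
lemma BA_46: "sm f (A x y 46) = B x y f 46" by (simp add: B_def)
lemma BA_47: "sm f (A x y 47) = B x y f 47" by (simp add: B_def)
lemma BA_48: "sm f (A x y 48) = B x y f 48" by (simp add: B_def)
lemma BA_49: "sm f (A x y 49) = B x y f 49" by (simp add: B_def)
lemma BA_50: "sm f (A x y 50) = B x y f 50" by (simp add: B_def)
lemma BA_51: "sm f (A x y 51) = B x y f 51" by (simp add: B_def)
lemma BA_52: "sm f (A x y 52) = B x y f 52" by (simp add: B_def)
lemma BA_53: "sm f (A x y 53) = B x y f 53" by (simp add: B_def)
lemma BA_54: "sm f (A x y 54) = B x y f 54" by (simp add: B_def)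
lemma BA_55: "sm f (A x y 55) = B x y f 55" by (simp add: B_def)
lemma BA_56: "sm f (A x y 56) = B x y f 56" by (simp add: B_def)
lemma BA_57: "sm f (A x y 57) = B x y f 57" by (simp add: B_def)
lemma BA_58: "sm f (A x y 58) = B x y f 58" by (simp add: B_def)
lemma BA_59: "sm f (A x y 59) = B x y f 59" by (simp add: B_def)
lemma BA_60: "sm f (A x y 60) = B x y f 60" by (simp add: B_def)
lemma BA_61: "sm f (A x y 61) = B x y f 61" by (simp add: B_def)
lemma BA_62: "sm f (A x y 62) = B x y f 62" by (simp add: B_def)
lemma BA_63: "sm f (A x y 63) = B x y f 63" by (simp add: B_def)
lemma Bx_64: "sm (anc x f) y = B x y f 64" by (simp add: B_def wd_def)
lemma By_80: "sm (anc y f) x = B x y f 80" by (simp add: B_def wd_def)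
lemma Bx_65: "sm (anc x f) (J1 y) = B x y f 65" by (simp add: B_def wd_def)
lemma By_81: "sm (anc (J1 y) f) x = B x y f 81" by (simp add: B_def wd_def)
lemma Bx_66: "sm (anc x f) (J2 y) = B x y f 66" by (simp add: B_def wd_def)
lemma By_82: "sm (anc (J2 y) f) x = B x y f 82" by (simp add: B_def wd_def)
lemma Bx_67: "sm (anc x f) (J1 (J2 y)) = B x y f 67" by (simp add: B_def wd_def)
lemma By_83: "sm (anc (J1 (J2 y)) f) x = B x y f 83" by (simp add: B_def wd_def)
lemma Bx_68: "sm (anc (J1 x) f) y = B x y f 68" by (simp add: B_def wd_def)
lemma By_84: "sm (anc y f) (J1 x) = B x y f 84" by (simp add: B_def wd_def)
lemma Bx_69: "sm (anc (J1 x) f) (J1 y) = B x y f 69" by (simp add: B_def wd_def)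
lemma By_85: "sm (anc (J1 y) f) (J1 x) = B x y f 85" by (simp add: B_def wd_def)
lemma Bx_70: "sm (anc (J1 x) f) (J2 y) = B x y f 70" by (simp add: B_def wd_def)
lemma By_86: "sm (anc (J2 y) f) (J1 x) = B x y f 86" by (simp add: B_def wd_def)
lemma Bx_71: "sm (anc (J1 x) f) (J1 (J2 y)) = B x y f 71" by (simp add: B_def wd_def)
lemma By_87: "sm (anc (J1 (J2 y)) f) (J1 x) = B x y f 87" by (simp add: B_def wd_def)
lemma Bx_72: "sm (anc (J2 x) f) y = B x y f 72" by (simp add: B_def wd_def)
lemma By_88: "sm (anc y f) (J2 x) = B x y f 88" by (simp add: B_def wd_def)
lemma Bx_73: "sm (anc (J2 x) f) (J1 y) = B x y f 73" by (simp add: B_def wd_def)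
lemma By_89: "sm (anc (J1 y) f) (J2 x) = B x y f 89" by (simp add: B_def wd_def)
lemma Bx_74: "sm (anc (J2 x) f) (J2 y) = B x y f 74" by (simp add: B_def wd_def)
lemma By_90: "sm (anc (J2 y) f) (J2 x) = B x y f 90" by (simp add: B_def wd_def)
lemma Bx_75: "sm (anc (J2 x) f) (J1 (J2 y)) = B x y f 75" by (simp add: B_def wd_def)
lemma By_91: "sm (anc (J1 (J2 y)) f) (J2 x) = B x y f 91" by (simp add: B_def wd_def)
lemma Bx_76: "sm (anc (J1 (J2 x)) f) y = B x y f 76" by (simp add: B_def wd_def)
lemma By_92: "sm (anc y f) (J1 (J2 x)) = B x y f 92" by (simp add: B_def wd_def)
lemma Bx_77: "sm (anc (J1 (J2 x)) f) (J1 y) = B x y f 77" by (simp add: B_def wd_def)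
lemma By_93: "sm (anc (J1 y) f) (J1 (J2 x)) = B x y f 93" by (simp add: B_def wd_def)
lemma Bx_78: "sm (anc (J1 (J2 x)) f) (J2 y) = B x y f 78" by (simp add: B_def wd_def)
lemma By_94: "sm (anc (J2 y) f) (J1 (J2 x)) = B x y f 94" by (simp add: B_def wd_def)
lemma Bx_79: "sm (anc (J1 (J2 x)) f) (J1 (J2 y)) = B x y f 79" by (simp add: B_def wd_def)
lemma By_95: "sm (anc (J1 (J2 y)) f) (J1 (J2 x)) = B x y f 95" by (simp add: B_def wd_def)
lemmas Brules = BA_0 BA_1 BA_2 BA_3 BA_4 BA_5 BA_6 BA_7 BA_8 BA_9 BA_10 BA_11 BA_12 BA_13 BA_14 BA_15 BA_16 BA_17 BA_18 BA_19 BA_20 BA_21 BA_22 BA_23 BA_24 BA_25 BA_26 BA_27 BA_28 BA_29 BA_30 BA_31 BA_32 BA_33 BA_34 BA_35 BA_36 BA_37 BA_38 BA_39 BA_40 BA_41 BA_42 BA_43 BA_44 BA_45 BA_46 BA_47 BA_48 BA_49 BA_50 BA_51 BA_52 BA_53 BA_54 BA_55 BA_56 BA_57 BA_58 BA_59 BA_60 BA_61 BA_62 BA_63 Bx_64 By_80 Bx_65 By_81 Bx_66 By_82 Bx_67 By_83 Bx_68 By_84 Bx_69 By_85 Bx_70 By_86 Bx_71 By_87 Bx_72 By_88 Bx_73 By_89 Bx_74 By_90 Bx_75 By_91 Bx_76 By_92 Bx_77 By_93 Bx_78 By_94 Bx_79 By_95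


lemma leib2:
  assumes x: "x\<in>S" and y: "y\<in>S" and f: "f\<in>F"
  shows "D0 x (sm f y) = sm (anc x f) y + sm f (D0 x y)"
  using x y f unfolding D0_def Let_def
  apply (simp add: lin smlin brA[OF x y] JA[OF x y])
  apply (simp only: Brules[where x=x and y=y])
  apply (simp only: lc_single[of "B x y f"] lc_add lc_diff lc_neg lc_scale lc_zero)
  apply (rule lc_eqI)
  apply simp
  done

lemma leib1:
  assumes x: "x\<in>S" and y: "y\<in>S" and f: "f\<in>F"
  shows "D0 (sm f x) y = sm f (D0 x y)"
  using x y f unfolding D0_def Let_def
  apply (simp add: lin smlin brA[OF x y] JA[OF x y])
  apply (simp only: Brules[where x=x and y=y])
  apply (simp only: lc_single[of "B x y f"] lc_add lc_diff lc_neg lc_scale lc_zero)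
  apply (rule lc_eqI)
  apply simp
  done

end



lemma cinf_coI:
  assumes "X S f"
    and "\<And>S f. X S f \<Longrightarrow> f differentiable_on S \<and>
           (\<forall>v. X S (\<lambda>x. frechet_derivative f (at x) v) \<or> cinf_on S (\<lambda>x. frechet_derivative f (at x) v))"
  shows "cinf_on S f"
  using assms(1) by (rule cinf_on.coinduct) (use assms(2) in blast)

lemma cinf_D:
  assumes "cinf_on S f"
  shows "f differentiable_on S" "cinf_on S (\<lambda>x. frechet_derivative f (at x) v)"
  using assms by (auto elim: cinf_on.cases)

lemma cinf_cong:
  assumes S: "open S" and f: "cinf_on S f" and eq: "\<forall>x\<in>S. f x = g x"
  shows "cinf_on S g"
proof -
  let ?X = "\<lambda>S' g'. S' = S \<and> (\<exists>f'. cinf_on S f' \<and> (\<forall>x\<in>S. f' x = g' x))"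
  show ?thesis
  proof (rule cinf_coI[of ?X])
    show "?X S g" using f eq by blast
  next
    fix S' g' assume "?X S' g'"
    then obtain f' where S': "S' = S" and f': "cinf_on S f'" and e: "\<forall>x\<in>S. f' x = g' x" by blast
    have fat: "f' differentiable at x" if "x\<in>S" for x
      using cinf_D(1)[OF f'] S that differentiable_on_eq_differentiable_at by blast
    have gat: "g' differentiable at x" if "x\<in>S" for x
    proof -
      from fat[OF that] obtain D where "(f' has_derivative D) (at x)" unfolding differentiable_def by blast
      then have "(g' has_derivative D) (at x)"
        by (rule has_derivative_transform_within_open[OF _ S that]) (use e in auto)
      then show ?thesis unfolding differentiable_def by blast
    qed
    have "g' differentiable_on S" using gat S differentiable_on_eq_differentiable_at by blast
    moreover have fdeq: "frechet_derivative f' (at x) = frechet_derivative g' (at x)" if "x\<in>S" for x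
      by (rule frechet_derivative_transform_within_open[OF fat[OF that] S that]) (use e in auto)
    moreover have "?X S' (\<lambda>x. frechet_derivative g' (at x) v)" for v
    proof -
      have "cinf_on S (\<lambda>x. frechet_derivative f' (at x) v)" by (rule cinf_D(2)[OF f'])
      moreover have "\<forall>x\<in>S. frechet_derivative f' (at x) v = frechet_derivative g' (at x) v"
        using fdeq by simp
      ultimately show ?thesis using S' by blast
    qed
    ultimately show "g' differentiable_on S' \<and>
           (\<forall>v. ?X S' (\<lambda>x. frechet_derivative g' (at x) v) \<or> cinf_on S' (\<lambda>x. frechet_derivative g' (at x) v))"
      using S' by blast
  qed
qed

lemma cinf_const: "cinf_on S (\<lambda>x. c)"
proof -
  let ?X = "\<lambda>S' g'. \<exists>c. g' = (\<lambda>x::'a. c)"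
  show ?thesis
  proof (rule cinf_coI[of ?X])
    show "?X S (\<lambda>x. c)" by blast
  next
    fix S' and g' :: "'a \<Rightarrow> real" assume "?X S' g'"
    then obtain c where g': "g' = (\<lambda>x. c)" by blast
    have "frechet_derivative (\<lambda>x. c) (at x) = (\<lambda>v. 0)" for x :: 'a
      by (rule frechet_derivative_at[symmetric]) (rule has_derivative_const)
    then show "g' differentiable_on S' \<and>
           (\<forall>v. ?X S' (\<lambda>x. frechet_derivative g' (at x) v) \<or> cinf_on S' (\<lambda>x. frechet_derivative g' (at x) v))"
      using g' by auto
  qed
qed

definition HH :: "(('a \<Rightarrow> real) \<times> ('a \<Rightarrow> real)) list \<Rightarrow> 'a \<Rightarrow> real" where
  "HH ps x = sum_list (map (\<lambda>(f,g). f x * g x) ps)"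

definition dps :: "(('a::euclidean_space \<Rightarrow> real) \<times> ('a \<Rightarrow> real)) list \<Rightarrow> 'a \<Rightarrow> (('a \<Rightarrow> real) \<times> ('a \<Rightarrow> real)) list" where
  "dps ps v = concat (map (\<lambda>(f,g). [(f, \<lambda>x. frechet_derivative g (at x) v), (\<lambda>x. frechet_derivative f (at x) v, g)]) ps)"

lemma HH_deriv:
  assumes "\<forall>(f,g)\<in>set ps. f differentiable at x \<and> g differentiable at x"
  shows "(HH ps has_derivative (\<lambda>v. HH (dps ps v) x)) (at x)"
  using assms
proof (induction ps)
  case Nil
  then show ?case by (simp add: HH_def dps_def)
next
  case (Cons p ps)
  obtain f g where p: "p = (f,g)" by (cases p)
  have f: "(f has_derivative frechet_derivative f (at x)) (at x)" and g: "(g has_derivative frechet_derivative g (at x)) (at x)"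
    using Cons.prems p by (auto simp: frechet_derivative_works[symmetric])
  have IH: "(HH ps has_derivative (\<lambda>v. HH (dps ps v) x)) (at x)"
    using Cons by auto
  have "((\<lambda>x. f x * g x + HH ps x) has_derivative
     (\<lambda>v. (f x * frechet_derivative g (at x) v + frechet_derivative f (at x) v * g x) + HH (dps ps v) x)) (at x)"
    by (intro has_derivative_add has_derivative_mult f g IH)
  moreover have "HH (p#ps) = (\<lambda>x. f x * g x + HH ps x)" by (simp add: HH_def p fun_eq_iff)
  moreover have "(\<lambda>v. HH (dps (p#ps) v) x) = (\<lambda>v. (f x * frechet_derivative g (at x) v + frechet_derivative f (at x) v * g x) + HH (dps ps v) x)"
    by (simp add: HH_def dps_def p fun_eq_iff)
  ultimately show ?case by simp
qed

lemma cinf_HH: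
  assumes S: "open S" and ps: "\<forall>(f,g)\<in>set ps. cinf_on S f \<and> cinf_on S g"
  shows "cinf_on S (HH ps)"
proof -
  let ?X = "\<lambda>S' h. S' = S \<and> (\<exists>qs. (\<forall>(f,g)\<in>set qs. cinf_on S f \<and> cinf_on S g) \<and> (\<forall>x\<in>S. HH qs x = h x))"
  show ?thesis
  proof (rule cinf_coI[of ?X])
    show "?X S (HH ps)" using ps by blast
  next
    fix S' h assume "?X S' h"
    then obtain qs where S': "S' = S" and qs: "\<forall>(f,g)\<in>set qs. cinf_on S f \<and> cinf_on S g"
      and hq: "\<forall>x\<in>S. HH qs x = h x" by blast
    have diff: "\<forall>(f,g)\<in>set qs. f differentiable at x \<and> g differentiable at x" if "x\<in>S" for x
      using qs that S by (auto dest!: cinf_D(1) simp: differentiable_on_eq_differentiable_at)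
    have hd: "(h has_derivative (\<lambda>v. HH (dps qs v) x)) (at x)" if "x\<in>S" for x
      by (rule has_derivative_transform_within_open[OF HH_deriv[OF diff[OF that]] S that]) (use hq in auto)
    have "h differentiable_on S"
      using hd S differentiable_on_eq_differentiable_at differentiable_def by blast
    moreover have "\<forall>x\<in>S. HH (dps qs v) x = frechet_derivative h (at x) v" for v
      using frechet_derivative_at[OF hd, symmetric] by simp
    moreover have "\<forall>(f,g)\<in>set (dps qs v). cinf_on S f \<and> cinf_on S g" for v
      using qs by (auto simp: dps_def intro: cinf_D(2))
    ultimately show "h differentiable_on S' \<and>
           (\<forall>v. ?X S' (\<lambda>x. frechet_derivative h (at x) v) \<or> cinf_on S' (\<lambda>x. frechet_derivative h (at x) v))"
      using S' by blast
  qed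
qed

lemma cinf_add:
  assumes "open S" "cinf_on S f" "cinf_on S g"
  shows "cinf_on S (\<lambda>x. f x + g x)"
proof -
  have "cinf_on S (HH [(f, \<lambda>x. 1), (g, \<lambda>x. 1)])"
    using assms by (intro cinf_HH) (auto simp: cinf_const)
  moreover have "HH [(f, \<lambda>x. 1), (g, \<lambda>x. 1)] = (\<lambda>x. f x + g x)" by (simp add: HH_def fun_eq_iff)
  ultimately show ?thesis by simp
qed

lemma cinf_mult:
  assumes "open S" "cinf_on S f" "cinf_on S g"
  shows "cinf_on S (\<lambda>x. f x * g x)"
proof -
  have "cinf_on S (HH [(f, g)])"
    using assms by (intro cinf_HH) auto
  moreover have "HH [(f, g)] = (\<lambda>x. f x * g x)" by (simp add: HH_def fun_eq_iff)
  ultimately show ?thesis by simp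
qed




instantiation "fun" :: (type, real_vector) real_vector
begin
definition scaleR_fun :: "real \<Rightarrow> ('a \<Rightarrow> 'b) \<Rightarrow> 'a \<Rightarrow> 'b" where
  "scaleR_fun r f = (\<lambda>x. r *\<^sub>R f x)"
instance
  by standard (simp_all add: scaleR_fun_def fun_eq_iff scaleR_add_right scaleR_add_left)
end

lemma scaleR_fun_apply [simp]: "(r *\<^sub>R f) x = r *\<^sub>R f x"
  by (simp add: scaleR_fun_def)

lemma sec_add_eq: "sec_add a b = a + b"
  by (simp add: sec_add_def vf_add_def prod_eq_iff fun_eq_iff)
lemma sec_smul_const: "sec_smul (\<lambda>p. c) a = c *\<^sub>R a"
  by (simp add: sec_smul_def vf_smul_def prod_eq_iff fun_eq_iff)
lemma sec_scale_eq: "sec_scale c a = c *\<^sub>R a"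
  by (simp add: sec_scale_def sec_smul_const)
lemma sec_neg_eq: "sec_neg a = - a"
  by (simp add: sec_neg_def sec_scale_eq)
lemma sec_sub_eq: "sec_sub a b = a - b"
  by (simp add: sec_sub_def sec_add_eq sec_neg_eq)
lemma sec_zero_eq: "sec_zero = 0"
  by (simp add: sec_zero_def prod_eq_iff fun_eq_iff)

lemmas sec_eqs = sec_add_eq sec_scale_eq sec_neg_eq sec_sub_eq sec_zero_eq

lemma sec_smul_add: "sec_smul f (a + b) = sec_smul f a + sec_smul f b"
  by (simp add: sec_smul_def vf_smul_def prod_eq_iff fun_eq_iff algebra_simps)
lemma sec_smul_scale: "sec_smul f (c *\<^sub>R a) = c *\<^sub>R sec_smul f a"
  by (simp add: sec_smul_def vf_smul_def prod_eq_iff fun_eq_iff algebra_simps)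

lemma C_const: "(\<lambda>p. c) \<in> smooth_fns A"
  by (auto simp: smooth_fns_def o_def cinf_const)

locale conc =
  fixes A :: "('m set \<times> ('m \<Rightarrow> 'e::euclidean_space)) set" and nb :: "'m vf \<Rightarrow> 'm vf \<Rightarrow> 'm vf"
  assumes man: "smooth_manifold A" and ac: "affine_connection A nb"
begin

abbreviation "C \<equiv> smooth_fns A"
abbreviation "VF \<equiv> vector_fields A"
abbreviation "OM \<equiv> one_forms A"
abbreviation "SS \<equiv> sections A"

lemma chart_open: "(U,\<phi>) \<in> A \<Longrightarrow> open (\<phi> ` U)"
  using man unfolding smooth_manifold_def by fastforce

lemma C_add: "f \<in> C \<Longrightarrow> g \<in> C \<Longrightarrow> (\<lambda>p. f p + g p) \<in> C"
  unfolding smooth_fns_def using chart_open by (auto simp: o_def intro!: cinf_add)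
lemma C_mult: "f \<in> C \<Longrightarrow> g \<in> C \<Longrightarrow> (\<lambda>p. f p * g p) \<in> C"
  unfolding smooth_fns_def using chart_open by (auto simp: o_def intro!: cinf_mult)
lemma C_cmult: "f \<in> C \<Longrightarrow> (\<lambda>p. c * f p) \<in> C"
  using C_mult[OF C_const] by blast
lemma C_diff: "f \<in> C \<Longrightarrow> g \<in> C \<Longrightarrow> (\<lambda>p. f p - g p) \<in> C"
proof -
  assume f: "f \<in> C" and g: "g \<in> C"
  have "(\<lambda>p. f p + (\<lambda>q. (-1) * g q) p) \<in> C" by (rule C_add[OF f C_cmult[OF g]])
  then show ?thesis by simp
qed

lemma VF_C: "X \<in> VF \<Longrightarrow> X g \<in> C"
  unfolding vector_fields_def by (cases "g \<in> C") (auto simp: C_const)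
lemma VF_add_fn: "X \<in> VF \<Longrightarrow> f \<in> C \<Longrightarrow> g \<in> C \<Longrightarrow> X (\<lambda>p. f p + g p) = (\<lambda>p. X f p + X g p)"
  unfolding vector_fields_def by blast
lemma VF_mult_fn: "X \<in> VF \<Longrightarrow> f \<in> C \<Longrightarrow> g \<in> C \<Longrightarrow> X (\<lambda>p. f p * g p) = (\<lambda>p. f p * X g p + g p * X f p)"
  unfolding vector_fields_def by blast
lemma VF_scal_fn: "X \<in> VF \<Longrightarrow> f \<in> C \<Longrightarrow> X (\<lambda>p. c * f p) = (\<lambda>p. c * X f p)"
  unfolding vector_fields_def by blast
lemma VF_notC: "X \<in> VF \<Longrightarrow> f \<notin> C \<Longrightarrow> X f = (\<lambda>p. 0)"
  unfolding vector_fields_def by blast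
lemma VF_zero_fn: "X \<in> VF \<Longrightarrow> X (\<lambda>p. 0) = (\<lambda>p. 0)"
proof -
  assume X: "X \<in> VF"
  have "X (\<lambda>p. 0 * (\<lambda>q. 0::real) p) = (\<lambda>p. 0 * X (\<lambda>q. 0) p)"
    by (rule VF_scal_fn[OF X C_const])
  then show ?thesis by simp
qed
lemma VF_diff_fn: "X \<in> VF \<Longrightarrow> f \<in> C \<Longrightarrow> g \<in> C \<Longrightarrow> X (\<lambda>p. f p - g p) = (\<lambda>p. X f p - X g p)"
proof -
  assume X: "X \<in> VF" and f: "f \<in> C" and g: "g \<in> C"
  have "X (\<lambda>p. f p - g p) = X (\<lambda>p. f p + (\<lambda>q. (-1) * g q) p)" by simp
  also have "\<dots> = (\<lambda>p. X f p + X (\<lambda>q. (-1) * g q) p)" by (rule VF_add_fn[OF X f C_cmult[OF g]])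
  also have "\<dots> = (\<lambda>p. X f p - X g p)" using VF_scal_fn[OF X g, of "-1"] by simp
  finally show ?thesis .
qed

lemma vf_add_VF: "X \<in> VF \<Longrightarrow> Y \<in> VF \<Longrightarrow> vf_add X Y \<in> VF"
  unfolding vf_add_def
  apply (subst vector_fields_def, simp)
  apply (intro conjI ballI allI impI)
  by (simp_all add: C_add VF_C VF_add_fn VF_mult_fn VF_scal_fn VF_notC algebra_simps)

lemma vf_smul_VF: "h \<in> C \<Longrightarrow> X \<in> VF \<Longrightarrow> vf_smul h X \<in> VF"
  unfolding vf_smul_def
  apply (subst vector_fields_def, simp)
  apply (intro conjI ballI allI impI)
  by (simp_all add: C_mult VF_C VF_add_fn VF_mult_fn VF_scal_fn VF_notC algebra_simps)

lemma lie_VF: "X \<in> VF \<Longrightarrow> Y \<in> VF \<Longrightarrow> lie X Y \<in> VF"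
proof -
  assume X: "X \<in> VF" and Y: "Y \<in> VF"
  show ?thesis
    unfolding lie_def
    apply (subst vector_fields_def, simp)
    apply (intro conjI ballI allI impI)
  proof -
    fix f assume "f \<in> C" then show "(\<lambda>p. X (Y f) p - Y (X f) p) \<in> C" using X Y by (simp add: C_diff VF_C)
  next
    fix f g assume f: "f \<in> C" and g: "g \<in> C"
    show "(\<lambda>p. X (Y (\<lambda>p. f p + g p)) p - Y (X (\<lambda>p. f p + g p)) p) =
          (\<lambda>p. X (Y f) p - Y (X f) p + (X (Y g) p - Y (X g) p))"
      using X Y f g by (simp add: VF_add_fn VF_C fun_eq_iff)
    have "Y (\<lambda>p. f p * g p) = (\<lambda>p. (\<lambda>q. f q * Y g q) p + (\<lambda>q. g q * Y f q) p)"
      using Y f g by (simp add: VF_mult_fn)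
    then have XY: "X (Y (\<lambda>p. f p * g p)) = (\<lambda>p. (f p * X (Y g) p + Y g p * X f p) + (g p * X (Y f) p + Y f p * X g p))"
      using X Y f g by (simp add: VF_add_fn[OF X] VF_add_fn[OF Y] VF_mult_fn[OF X] VF_mult_fn[OF Y] C_mult VF_C)
    have "X (\<lambda>p. f p * g p) = (\<lambda>p. (\<lambda>q. f q * X g q) p + (\<lambda>q. g q * X f q) p)"
      using X f g by (simp add: VF_mult_fn)
    then have YX: "Y (X (\<lambda>p. f p * g p)) = (\<lambda>p. (f p * Y (X g) p + X g p * Y f p) + (g p * Y (X f) p + X f p * Y g p))"
      using X Y f g by (simp add: VF_add_fn[OF X] VF_add_fn[OF Y] VF_mult_fn[OF X] VF_mult_fn[OF Y] C_mult VF_C)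
    show "(\<lambda>p. X (Y (\<lambda>p. f p * g p)) p - Y (X (\<lambda>p. f p * g p)) p) =
          (\<lambda>p. f p * (X (Y g) p - Y (X g) p) + g p * (X (Y f) p - Y (X f) p))"
      unfolding XY YX by (simp add: fun_eq_iff algebra_simps)
  next
    fix c f assume f: "f \<in> C"
    show "(\<lambda>p. X (Y (\<lambda>p. c * f p)) p - Y (X (\<lambda>p. c * f p)) p) = (\<lambda>p. c * (X (Y f) p - Y (X f) p))"
      using X Y f by (simp add: VF_scal_fn VF_C algebra_simps)
  next
    fix f assume f: "f \<notin> C"
    show "(\<lambda>p. X (Y f) p - Y (X f) p) = (\<lambda>p. 0)"
      using X Y f by (simp add: VF_notC VF_zero_fn)
  qed
qed


lemma ac_VF: "X \<in> VF \<Longrightarrow> Y \<in> VF \<Longrightarrow> nb X Y \<in> VF"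
  using ac unfolding affine_connection_def by blast
lemma ac_add1: "X \<in> VF \<Longrightarrow> X' \<in> VF \<Longrightarrow> Y \<in> VF \<Longrightarrow> nb (vf_add X X') Y = vf_add (nb X Y) (nb X' Y)"
  using ac unfolding affine_connection_def by blast
lemma ac_smul1: "f \<in> C \<Longrightarrow> X \<in> VF \<Longrightarrow> Y \<in> VF \<Longrightarrow> nb (vf_smul f X) Y = vf_smul f (nb X Y)"
  using ac unfolding affine_connection_def by blast
lemma ac_smul2: "f \<in> C \<Longrightarrow> X \<in> VF \<Longrightarrow> Y \<in> VF \<Longrightarrow> nb X (vf_smul f Y) = vf_add (vf_smul (X f) Y) (vf_smul f (nb X Y))"
  using ac unfolding affine_connection_def by blast
lemma ac_add2: "X \<in> VF \<Longrightarrow> Y \<in> VF \<Longrightarrow> Y' \<in> VF \<Longrightarrow> nb X (vf_add Y Y') = vf_add (nb X Y) (nb X Y')"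
  using ac unfolding affine_connection_def by blast

lemma vf_add_apply: "vf_add X Y g p = X g p + Y g p" by (simp add: vf_add_def)
lemma vf_smul_apply: "vf_smul f X g p = f p * X g p" by (simp add: vf_smul_def)

lemma OM_C: "\<eta> \<in> OM \<Longrightarrow> Z \<in> VF \<Longrightarrow> \<eta> Z \<in> C"
  unfolding one_forms_def by blast
lemma OM_add: "\<eta> \<in> OM \<Longrightarrow> X \<in> VF \<Longrightarrow> Y \<in> VF \<Longrightarrow> \<eta> (vf_add X Y) = (\<lambda>p. \<eta> X p + \<eta> Y p)"
  unfolding one_forms_def by blast
lemma OM_smul: "\<eta> \<in> OM \<Longrightarrow> f \<in> C \<Longrightarrow> X \<in> VF \<Longrightarrow> \<eta> (vf_smul f X) = (\<lambda>p. f p * \<eta> X p)"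
  unfolding one_forms_def by blast
lemma OM_notVF: "\<eta> \<in> OM \<Longrightarrow> X \<notin> VF \<Longrightarrow> \<eta> X = (\<lambda>p. 0)"
  unfolding one_forms_def by blast

lemma form_add_OM: "\<eta> \<in> OM \<Longrightarrow> \<eta>' \<in> OM \<Longrightarrow> (\<lambda>Z p. \<eta> Z p + \<eta>' Z p) \<in> OM"
  apply (subst one_forms_def, simp)
  apply (intro conjI ballI allI impI)
  by (simp_all add: C_add OM_C OM_add OM_smul OM_notVF algebra_simps)

lemma form_smul_OM: "h \<in> C \<Longrightarrow> \<eta> \<in> OM \<Longrightarrow> (\<lambda>Z p. h p * \<eta> Z p) \<in> OM"
  apply (subst one_forms_def, simp)
  apply (intro conjI ballI allI impI)
  by (simp_all add: C_mult OM_C OM_add OM_smul OM_notVF algebra_simps)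

lemma fn_OM: "X \<in> VF \<Longrightarrow> \<eta> \<in> OM \<Longrightarrow> form_nabla A nb X \<eta> \<in> OM"
proof -
  assume X: "X \<in> VF" and e: "\<eta> \<in> OM"
  have h1: "(\<lambda>p. X (\<eta> Y) p - \<eta> (nb X Y) p) \<in> C" if Y: "Y \<in> VF" for Y
    using X Y e by (simp add: C_diff VF_C OM_C ac_VF)
  have h2: "X (\<eta> (vf_add Y Y')) = (\<lambda>p. X (\<eta> Y) p + X (\<eta> Y') p)"
     "\<eta> (nb X (vf_add Y Y')) = (\<lambda>p. \<eta> (nb X Y) p + \<eta> (nb X Y') p)" if Y: "Y \<in> VF" and Y': "Y' \<in> VF" for Y Y'
    using X Y Y' e by (simp_all add: OM_add ac_add2 ac_VF VF_add_fn[OF X] OM_C)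
  have h3: "X (\<eta> (vf_smul f Y)) = (\<lambda>p. f p * X (\<eta> Y) p + \<eta> Y p * X f p)"
     "\<eta> (nb X (vf_smul f Y)) = (\<lambda>p. X f p * \<eta> Y p + f p * \<eta> (nb X Y) p)" if f: "f \<in> C" and Y: "Y \<in> VF" for f Y
    using X Y e f VF_C[OF X, of f] by (simp_all add: OM_smul VF_mult_fn[OF X] OM_C ac_smul2 OM_add vf_smul_VF ac_VF)
  show ?thesis
    unfolding form_nabla_def
    apply (subst one_forms_def, simp)
    apply (intro conjI ballI allI impI)
    using h1 h2 h3 by (simp_all add: vf_add_VF vf_smul_VF fun_eq_iff algebra_simps)
qed

lemma SS_iff: "a \<in> SS \<longleftrightarrow> fst a \<in> VF \<and> snd a \<in> OM"
  by (cases a) (simp add: sections_def)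

lemma sec_add_SS: "a \<in> SS \<Longrightarrow> b \<in> SS \<Longrightarrow> sec_add a b \<in> SS"
  by (simp add: SS_iff sec_add_def vf_add_VF form_add_OM)
lemma sec_smul_SS: "f \<in> C \<Longrightarrow> a \<in> SS \<Longrightarrow> sec_smul f a \<in> SS"
  by (simp add: SS_iff sec_smul_def vf_smul_VF form_smul_OM)
lemma br_SS: "a \<in> SS \<Longrightarrow> b \<in> SS \<Longrightarrow> nbracket A nb a b \<in> SS"
proof -
  assume a: "a \<in> SS" and b: "b \<in> SS"
  have "(\<lambda>Z p. form_nabla A nb (fst a) (snd b) Z p + (\<lambda>Z p. (\<lambda>q. -1) p * form_nabla A nb (fst b) (snd a) Z p) Z p) \<in> OM"
    using a b by (intro form_add_OM form_smul_OM fn_OM C_const) (auto simp: SS_iff)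
  then show ?thesis using a b by (simp add: SS_iff nbracket_def lie_VF)
qed

lemma lie_add1: "X \<in> VF \<Longrightarrow> X' \<in> VF \<Longrightarrow> Y \<in> VF \<Longrightarrow> lie (vf_add X X') Y = vf_add (lie X Y) (lie X' Y)"
  by (simp add: lie_def vf_add_def fun_eq_iff VF_add_fn VF_C)

lemma fn_add1: "X \<in> VF \<Longrightarrow> X' \<in> VF \<Longrightarrow> \<beta> \<in> OM \<Longrightarrow>
   form_nabla A nb (vf_add X X') \<beta> = (\<lambda>Z p. form_nabla A nb X \<beta> Z p + form_nabla A nb X' \<beta> Z p)"
  by (simp add: form_nabla_def fun_eq_iff ac_add1 OM_add ac_VF vf_add_apply)

lemma fn_add2: "X \<in> VF \<Longrightarrow> \<eta> \<in> OM \<Longrightarrow> \<eta>' \<in> OM \<Longrightarrow>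
   form_nabla A nb X (\<lambda>Z p. \<eta> Z p + \<eta>' Z p) = (\<lambda>Z p. form_nabla A nb X \<eta> Z p + form_nabla A nb X \<eta>' Z p)"
  by (simp add: form_nabla_def fun_eq_iff VF_add_fn OM_C)

lemma br_add_sec: "a \<in> SS \<Longrightarrow> b \<in> SS \<Longrightarrow> c \<in> SS \<Longrightarrow>
   nbracket A nb (sec_add a b) c = sec_add (nbracket A nb a c) (nbracket A nb b c)"
  by (simp add: SS_iff nbracket_def sec_add_def lie_add1 fn_add1 fn_add2 fun_eq_iff)

lemma lie_smul2: "f \<in> C \<Longrightarrow> X \<in> VF \<Longrightarrow> Y \<in> VF \<Longrightarrow> lie X (vf_smul f Y) = vf_add (vf_smul (X f) Y) (vf_smul f (lie X Y))"
  by (simp add: lie_def vf_smul_def vf_add_def fun_eq_iff VF_mult_fn VF_C algebra_simps)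

lemma fn_smul2: "f \<in> C \<Longrightarrow> X \<in> VF \<Longrightarrow> \<beta> \<in> OM \<Longrightarrow>
   form_nabla A nb X (\<lambda>Z p. f p * \<beta> Z p) = (\<lambda>Z p. X f p * \<beta> Z p + f p * form_nabla A nb X \<beta> Z p)"
  by (simp add: form_nabla_def fun_eq_iff VF_mult_fn OM_C OM_notVF algebra_simps)

lemma fn_smul1: "f \<in> C \<Longrightarrow> Y \<in> VF \<Longrightarrow> \<eta> \<in> OM \<Longrightarrow>
   form_nabla A nb (vf_smul f Y) \<eta> = (\<lambda>Z p. f p * form_nabla A nb Y \<eta> Z p)"
  by (simp add: form_nabla_def fun_eq_iff ac_smul1 OM_smul ac_VF vf_smul_apply right_diff_distrib)

lemma br_sm_sec: "a \<in> SS \<Longrightarrow> b \<in> SS \<Longrightarrow> f \<in> C \<Longrightarrow>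
   nbracket A nb a (sec_smul f b) = sec_add (sec_smul (fst a f) b) (sec_smul f (nbracket A nb a b))"
  by (simp add: SS_iff nbracket_def sec_add_def sec_smul_def lie_smul2 fn_smul1 fn_smul2 fun_eq_iff algebra_simps)

lemma br_anti_sec: "nbracket A nb a b = - nbracket A nb b a"
  by (simp add: nbracket_def lie_def prod_eq_iff fun_eq_iff)

lemma VF_const: "X \<in> VF \<Longrightarrow> X (\<lambda>p. c) = (\<lambda>p. 0)"
proof -
  assume X: "X \<in> VF"
  have "X (\<lambda>p. (\<lambda>q. 1::real) p * (\<lambda>q. 1) p) = (\<lambda>p. 1 * X (\<lambda>q. 1) p + 1 * X (\<lambda>q. 1) p)"
    by (rule VF_mult_fn[OF X C_const C_const])
  then have one: "X (\<lambda>p. 1) = (\<lambda>p. 0)" by (simp add: fun_eq_iff)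
  have "X (\<lambda>p. c * (\<lambda>q. 1::real) p) = (\<lambda>p. c * X (\<lambda>q. 1) p)"
    by (rule VF_scal_fn[OF X C_const])
  then show ?thesis using one by simp
qed


end

locale conc_q = conc A nb for A :: "('m set \<times> ('m \<Rightarrow> 'e::euclidean_space)) set" and nb +
  fixes J1 J2 :: "'m sec \<Rightarrow> 'm sec"
  assumes gq: "gen_quaternionic A nb J1 J2"
begin

lemma endo1: "gen_endo A J1" and endo2: "gen_endo A J2"
  using gq by (auto simp: gen_quaternionic_def)

lemma J_SS: "gen_endo A K \<Longrightarrow> a \<in> SS \<Longrightarrow> K a \<in> SS"
  unfolding gen_endo_def by blast
lemma J_add: "gen_endo A K \<Longrightarrow> a \<in> SS \<Longrightarrow> b \<in> SS \<Longrightarrow> K (a + b) = K a + K b"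
  unfolding gen_endo_def sec_add_eq by blast
lemma J_smul: "gen_endo A K \<Longrightarrow> f \<in> C \<Longrightarrow> a \<in> SS \<Longrightarrow> K (sec_smul f a) = sec_smul f (K a)"
  unfolding gen_endo_def by blast
lemma J_scale: assumes "gen_endo A K" "a \<in> SS" shows "K (c *\<^sub>R a) = c *\<^sub>R K a"
  using J_smul[OF assms(1) C_const assms(2)] by (simp add: sec_smul_const)

lemma add_SS: "a \<in> SS \<Longrightarrow> b \<in> SS \<Longrightarrow> a + b \<in> SS"
  using sec_add_SS by (simp add: sec_add_eq)
lemma scale_SS: "a \<in> SS \<Longrightarrow> c *\<^sub>R a \<in> SS"
  using sec_smul_SS[OF C_const, of a c] by (simp add: sec_smul_const)

lemma N_zero: "nabla_integrable A nb K \<Longrightarrow> a \<in> SS \<Longrightarrow> b \<in> SS \<Longrightarrow>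
   nbracket A nb (K a) (K b) - K (nbracket A nb (K a) b) - K (nbracket A nb a (K b)) + K (K (nbracket A nb a b)) = 0"
  unfolding nabla_integrable_def nijenhuis_def sec_eqs by blast

lemma br_scale_SS: "a \<in> SS \<Longrightarrow> b \<in> SS \<Longrightarrow> nbracket A nb (c *\<^sub>R a) b = c *\<^sub>R nbracket A nb a b"
proof -
  assume a: "a \<in> SS" and b: "b \<in> SS"
  have "nbracket A nb (c *\<^sub>R a) b = - nbracket A nb b (sec_smul (\<lambda>p. c) a)"
    by (simp add: br_anti_sec[of "c *\<^sub>R a" b] sec_smul_const)
  also have "\<dots> = - sec_add (sec_smul (fst b (\<lambda>p. c)) a) (sec_smul (\<lambda>p. c) (nbracket A nb b a))"
    using a b by (simp add: br_sm_sec C_const)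
  also have "fst b (\<lambda>p. c) = (\<lambda>p. 0)" using b by (simp add: SS_iff VF_const)
  finally show ?thesis
    by (simp add: sec_smul_const sec_add_eq br_anti_sec[of b a])
qed

sublocale Q: qalg_sm SS J1 J2 "nbracket A nb" C sec_smul "\<lambda>a f. fst a f"
proof unfold_locales
  show "\<And>x y. x \<in> SS \<Longrightarrow> y \<in> SS \<Longrightarrow> x + y \<in> SS" by (rule add_SS)
  show "\<And>x c. x \<in> SS \<Longrightarrow> c *\<^sub>R x \<in> SS" by (rule scale_SS)
  show "\<And>x. x \<in> SS \<Longrightarrow> J1 x \<in> SS" by (rule J_SS[OF endo1])
  show "\<And>x. x \<in> SS \<Longrightarrow> J2 x \<in> SS" by (rule J_SS[OF endo2])
  show "\<And>x y. x \<in> SS \<Longrightarrow> y \<in> SS \<Longrightarrow> nbracket A nb x y \<in> SS" by (rule br_SS)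
  show "\<And>x y. x \<in> SS \<Longrightarrow> y \<in> SS \<Longrightarrow> J1 (x + y) = J1 x + J1 y" by (rule J_add[OF endo1])
  show "\<And>x y. x \<in> SS \<Longrightarrow> y \<in> SS \<Longrightarrow> J2 (x + y) = J2 x + J2 y" by (rule J_add[OF endo2])
  show "\<And>x c. x \<in> SS \<Longrightarrow> J1 (c *\<^sub>R x) = c *\<^sub>R J1 x" by (rule J_scale[OF endo1])
  show "\<And>x c. x \<in> SS \<Longrightarrow> J2 (c *\<^sub>R x) = c *\<^sub>R J2 x" by (rule J_scale[OF endo2])
  show "\<And>x. x \<in> SS \<Longrightarrow> J1 (J1 x) = - x" using gq by (simp add: gen_quaternionic_def sec_neg_eq)
  show "\<And>x. x \<in> SS \<Longrightarrow> J2 (J2 x) = - x" using gq by (simp add: gen_quaternionic_def sec_neg_eq)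
  show "\<And>x. x \<in> SS \<Longrightarrow> J1 (J2 x) = - J2 (J1 x)" using gq by (simp add: gen_quaternionic_def sec_neg_eq)
  show "\<And>x y z. x \<in> SS \<Longrightarrow> y \<in> SS \<Longrightarrow> z \<in> SS \<Longrightarrow> nbracket A nb (x + y) z = nbracket A nb x z + nbracket A nb y z"
    using br_add_sec by (simp add: sec_add_eq)
  show "\<And>x y c. x \<in> SS \<Longrightarrow> y \<in> SS \<Longrightarrow> nbracket A nb (c *\<^sub>R x) y = c *\<^sub>R nbracket A nb x y"
    by (rule br_scale_SS)
  show "\<And>x y. nbracket A nb x y = - nbracket A nb y x" by (rule br_anti_sec)
  show "\<And>x y. x \<in> SS \<Longrightarrow> y \<in> SS \<Longrightarrow> nbracket A nb (J1 x) (J1 y) - J1 (nbracket A nb (J1 x) y) - J1 (nbracket A nb x (J1 y)) + J1 (J1 (nbracket A nb x y)) = 0"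
    using gq by (intro N_zero) (auto simp: gen_quaternionic_def)
  show "\<And>x y. x \<in> SS \<Longrightarrow> y \<in> SS \<Longrightarrow> nbracket A nb (J2 x) (J2 y) - J2 (nbracket A nb (J2 x) y) - J2 (nbracket A nb x (J2 y)) + J2 (J2 (nbracket A nb x y)) = 0"
    using gq by (intro N_zero) (auto simp: gen_quaternionic_def)
  show "\<And>x y. x \<in> SS \<Longrightarrow> y \<in> SS \<Longrightarrow> nbracket A nb (J1 (J2 x)) (J1 (J2 y)) - J1 (J2 (nbracket A nb (J1 (J2 x)) y)) - J1 (J2 (nbracket A nb x (J1 (J2 y)))) + J1 (J2 (J1 (J2 (nbracket A nb x y)))) = 0"
  proof -
    fix x y assume xy: "x \<in> SS" "y \<in> SS"
    have n3: "nabla_integrable A nb (J1 \<circ> J2)" using gq by (simp add: gen_quaternionic_def)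
    have "nbracket A nb ((J1 \<circ> J2) x) ((J1 \<circ> J2) y) - (J1 \<circ> J2) (nbracket A nb ((J1 \<circ> J2) x) y) - (J1 \<circ> J2) (nbracket A nb x ((J1 \<circ> J2) y)) + (J1 \<circ> J2) ((J1 \<circ> J2) (nbracket A nb x y)) = 0"
      by (rule N_zero[OF n3 xy])
    then show "nbracket A nb (J1 (J2 x)) (J1 (J2 y)) - J1 (J2 (nbracket A nb (J1 (J2 x)) y)) - J1 (J2 (nbracket A nb x (J1 (J2 y)))) + J1 (J2 (J1 (J2 (nbracket A nb x y)))) = 0"
      by simp
  qed
  show "\<And>f x. f \<in> C \<Longrightarrow> x \<in> SS \<Longrightarrow> sec_smul f x \<in> SS" by (rule sec_smul_SS)
  show "\<And>x f. x \<in> SS \<Longrightarrow> f \<in> C \<Longrightarrow> fst x f \<in> C" by (simp add: SS_iff VF_C)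
  show "\<And>f x. f \<in> C \<Longrightarrow> x \<in> SS \<Longrightarrow> J1 (sec_smul f x) = sec_smul f (J1 x)" by (rule J_smul[OF endo1])
  show "\<And>f x. f \<in> C \<Longrightarrow> x \<in> SS \<Longrightarrow> J2 (sec_smul f x) = sec_smul f (J2 x)" by (rule J_smul[OF endo2])
  show "\<And>f x y. sec_smul f (x + y) = sec_smul f x + sec_smul f y" by (rule sec_smul_add)
  show "\<And>f c x. sec_smul f (c *\<^sub>R x) = c *\<^sub>R sec_smul f x" by (rule sec_smul_scale)
  show "\<And>x y f. x \<in> SS \<Longrightarrow> y \<in> SS \<Longrightarrow> f \<in> C \<Longrightarrow> nbracket A nb x (sec_smul f y) = sec_smul (fst x f) y + sec_smul f (nbracket A nb x y)"
    using br_sm_sec by (simp add: sec_add_eq)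
qed


lemma obata_eq: "\<sigma> \<in> SS \<Longrightarrow> \<tau> \<in> SS \<Longrightarrow> obata A nb J1 J2 \<sigma> \<tau> = Q.D0 \<sigma> \<tau>"
proof -
  assume st: "\<sigma> \<in> SS" "\<tau> \<in> SS"
  have n: "nijenhuis A nb J1 \<sigma> \<tau> = 0" "nijenhuis A nb J2 \<sigma> \<tau> = 0" "nijenhuis A nb (J1 \<circ> J2) \<sigma> \<tau> = 0"
    using gq st by (auto simp: gen_quaternionic_def nabla_integrable_def sec_zero_eq)
  show ?thesis
    unfolding obata_def Let_def n Q.D0_def sec_eqs by simp
qed

lemma canonical: "is_canonical_connection A nb J1 J2 (obata A nb J1 J2)"
proof -
  have ga: "gen_affine_connection A (obata A nb J1 J2)"
    unfolding gen_affine_connection_def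
  proof (intro conjI ballI)
    fix \<sigma> \<tau> assume "\<sigma> \<in> SS" "\<tau> \<in> SS"
    then show "obata A nb J1 J2 \<sigma> \<tau> \<in> SS" by (simp add: obata_eq Q.D0_S)
  next
    fix \<sigma> \<sigma>' \<tau> assume "\<sigma> \<in> SS" "\<sigma>' \<in> SS" "\<tau> \<in> SS"
    then show "obata A nb J1 J2 (sec_add \<sigma> \<sigma>') \<tau> = sec_add (obata A nb J1 J2 \<sigma> \<tau>) (obata A nb J1 J2 \<sigma>' \<tau>)"
      by (simp add: sec_add_eq obata_eq Q.add_S Q.D0_add1)
  next
    fix \<sigma> \<tau> \<tau>' assume "\<sigma> \<in> SS" "\<tau> \<in> SS" "\<tau>' \<in> SS"
    then show "obata A nb J1 J2 \<sigma> (sec_add \<tau> \<tau>') = sec_add (obata A nb J1 J2 \<sigma> \<tau>) (obata A nb J1 J2 \<sigma> \<tau>')"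
      by (simp add: sec_add_eq obata_eq Q.add_S Q.D0_add2)
  next
    fix f \<sigma> \<tau> assume "f \<in> C" "\<sigma> \<in> SS" "\<tau> \<in> SS"
    then show "obata A nb J1 J2 (sec_smul f \<sigma>) \<tau> = sec_smul f (obata A nb J1 J2 \<sigma> \<tau>)"
      by (simp add: obata_eq sec_smul_SS Q.leib1)
  next
    fix f \<sigma> \<tau> assume "f \<in> C" "\<sigma> \<in> SS" "\<tau> \<in> SS"
    then show "obata A nb J1 J2 \<sigma> (sec_smul f \<tau>) = sec_add (sec_smul (fst \<sigma> f) \<tau>) (sec_smul f (obata A nb J1 J2 \<sigma> \<tau>))"
      by (simp add: obata_eq sec_smul_SS Q.leib2 sec_add_eq)
  qed
  have cp: "\<forall>K\<in>{J1, J2, J1 \<circ> J2}. \<forall>\<sigma>\<in>SS. \<forall>\<tau>\<in>SS. obata A nb J1 J2 \<sigma> (K \<tau>) = K (obata A nb J1 J2 \<sigma> \<tau>)"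
    by (auto simp: obata_eq Q.J1_S Q.J2_S Q.compat1 Q.compat2 Q.compat3)
  have tor: "let s = (\<sigma>, sec_neg (J1 \<sigma>)); t = (\<tau>, J1 \<tau>)
         in csub (csub (cext (obata A nb J1 J2) s t) (cext (obata A nb J1 J2) t s)) (cext (nbracket A nb) s t) = (sec_zero, sec_zero)"
    if st: "\<sigma> \<in> SS" "\<tau> \<in> SS" for \<sigma> \<tau>
  proof -
    have m: "- J1 \<sigma> \<in> SS" "J1 \<tau> \<in> SS" "J1 \<sigma> \<in> SS" using st by (simp_all add: Q.J1_S Q.neg_S)
    show ?thesis
      unfolding Let_def cext_def csub_def sec_eqs fst_conv snd_conv
      using Q.tor_real[OF st] Q.tor_imag[OF st] st m by (simp add: obata_eq)
  qed
  show ?thesis unfolding is_canonical_connection_def using ga cp tor by blast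
qed

lemma unique_D:
  assumes D: "is_canonical_connection A nb J1 J2 D" and st: "\<sigma> \<in> SS" "\<tau> \<in> SS"
  shows "D \<sigma> \<tau> = obata A nb J1 J2 \<sigma> \<tau>"
proof -
  have ga: "gen_affine_connection A D" and cp: "\<forall>K\<in>{J1, J2, J1 \<circ> J2}. \<forall>\<sigma>\<in>SS. \<forall>\<tau>\<in>SS. D \<sigma> (K \<tau>) = K (D \<sigma> \<tau>)"
    and tr: "\<forall>\<sigma>\<in>SS. \<forall>\<tau>\<in>SS. (let s = (\<sigma>, sec_neg (J1 \<sigma>)); t = (\<tau>, J1 \<tau>)
         in csub (csub (cext D s t) (cext D t s)) (cext (nbracket A nb) s t) = (sec_zero, sec_zero))"
    using D unfolding is_canonical_connection_def by blast+
  have "D \<sigma> \<tau> = Q.D0 \<sigma> \<tau>"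
  proof (rule Q.unique[OF _ _ _ _ _ st])
    show "\<And>a b. a \<in> SS \<Longrightarrow> b \<in> SS \<Longrightarrow> D a b \<in> SS" using ga unfolding gen_affine_connection_def by blast
    show "\<And>a b. a \<in> SS \<Longrightarrow> b \<in> SS \<Longrightarrow> D a (J1 b) = J1 (D a b)" using cp by blast
    show "\<And>a b. a \<in> SS \<Longrightarrow> b \<in> SS \<Longrightarrow> D a (J2 b) = J2 (D a b)" using cp by blast
    show "\<And>a b. a \<in> SS \<Longrightarrow> b \<in> SS \<Longrightarrow> D (- a) b = - D a b"
    proof -
      fix a b assume ab: "a \<in> SS" "b \<in> SS"
      have "D (sec_smul (\<lambda>p. -1) a) b = sec_smul (\<lambda>p. -1) (D a b)"
        using ga ab C_const unfolding gen_affine_connection_def by blast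
      then show "D (- a) b = - D a b" by (simp add: sec_smul_const)
    qed
    show "\<And>a b. a \<in> SS \<Longrightarrow> b \<in> SS \<Longrightarrow>
       (D a b - D (- J1 a) (J1 b)) - (D b a - D (J1 b) (- J1 a)) - (nbracket A nb a b - nbracket A nb (- J1 a) (J1 b)) = 0"
    proof -
      fix a b assume ab: "a \<in> SS" "b \<in> SS"
      have "fst (csub (csub (cext D (a, sec_neg (J1 a)) (b, J1 b)) (cext D (b, J1 b) (a, sec_neg (J1 a))))
              (cext (nbracket A nb) (a, sec_neg (J1 a)) (b, J1 b))) = fst (sec_zero, sec_zero)"
        using tr ab unfolding Let_def by simp
      then show "(D a b - D (- J1 a) (J1 b)) - (D b a - D (J1 b) (- J1 a)) - (nbracket A nb a b - nbracket A nb (- J1 a) (J1 b)) = 0"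
        unfolding cext_def csub_def sec_eqs fst_conv snd_conv .
    qed
  qed
  then show ?thesis using st by (simp add: obata_eq)
qed

end

theorem proposition5p13:
  fixes A :: "('m set \<times> ('m \<Rightarrow> 'e::euclidean_space)) set"
    and nb :: "'m vf \<Rightarrow> 'm vf \<Rightarrow> 'm vf"
    and J1 J2 :: "'m sec \<Rightarrow> 'm sec"
  assumes "smooth_manifold A"
    and "affine_connection A nb"
    and "gen_quaternionic A nb J1 J2"
  shows "is_canonical_connection A nb J1 J2 (obata A nb J1 J2) \<and>
         (\<forall>D. is_canonical_connection A nb J1 J2 D \<longrightarrow>
            (\<forall>\<sigma>\<in>sections A. \<forall>\<tau>\<in>sections A. D \<sigma> \<tau> = obata A nb J1 J2 \<sigma> \<tau>))"
proof -
  interpret conc_q A nb J1 J2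
    using assms by (simp add: conc_q_def conc_def conc_q_axioms_def)
  show ?thesis using canonical unique_D by blast
qed


end
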